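(* Under the standing setting (including the assumptions on $a$) and the absorbing-state assumptions (i)–(iv) in the context, there exist $K,c_1>0$, independent of $\mathbf{x}\in\mathbb{R}^N$, $\mathbf{v}\in\chi$, $\lambda>0$ and $t>0$, such that $$\|\mu_t^{\lambda,\mathbf{x},\mathbf{v}}-\tilde\mu_\infty^{\mathbf{x},\mathbf{v}}\|_{TV}\le Ke^{-c_1t\lambda}+Kt.$$
   Context: Let $N\ge1$, $\chi$ a finite set, $a:\mathbb{R}^N\times\chi\to\mathbb{R}^N$ with $a(\cdot,\mathbf{v})$ continuous and bounded for every $\mathbf{v}$ (we additionally assume $a(\cdot,\mathbf{v})$ globally Lipschitz so that all ODEs are well posed), and $\{\mathcal{P}_{\mathbf{x}}\}_{\mathbf{x}\in\mathbb{R}^N}$ a family of transition matrices on $\chi$. For $\lambda>0$, the fully coupled process $(X_t^{\lambda,\mathbf{x},\mathbf{v}},V_t^{\lambda,\mathbf{x},\mathbf{v}})$ on $\mathbb{R}^N\times\chi$ starts at $(\mathbf{x},\mathbf{v})$; $X$ is continuous and solves $\frac{d}{dt}X_t=a(X_t,V_t)$; $V$ is càdlàg, constant between rings of a Poisson clock of rate $\lambda$, and at a ring at time $s$ jumps from $V_{s-}$ to $\mathbf{v}'$ with probability $\mathcal{P}_{X_s}(V_{s-},\mathbf{v}')$. $\mu_t^{\lambda,\mathbf{x},\mathbf{v}}$ is the law of $V_t^{\lambda,\mathbf{x},\mathbf{v}}$. $\tilde V_k^{\mathbf{x},\mathbf{v}}$ is the discrete-time chain with transition matrix $\mathcal{P}_{\mathbf{x}}$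 started at $\mathbf{v}$. Absorbing-state assumptions: there are distinct states $\mathbf{e}^{(1)},\dots,\mathbf{e}^{(L)}\in\chi$ such that (i) each $\mathcal{P}_{\mathbf{x}}$ is stochastic; (ii) $\mathcal{P}_{\mathbf{x}}(\mathbf{e}^{(i)},\mathbf{e}^{(i)})=1$ for all $i,\mathbf{x}$; (iii) there exist $\tilde n\ge1$ and $z_0<1$ with $\mathbb{P}[\tilde V_{\tilde n}^{\mathbf{x},\mathbf{v}}\notin\{\mathbf{e}^{(1)},\dots,\mathbf{e}^{(L)}\}]\le z_0$ for all $\mathbf{x},\mathbf{v}$; (iv) there is $K_0>0$ with $\sum_{\mathbf{v}'}|\mathcal{P}_{\mathbf{x}}(\mathbf{v},\mathbf{v}')-\mathcal{P}_{\mathbf{x}'}(\mathbf{v},\mathbf{v}')|\le K_0\|\mathbf{x}-\mathbf{x}'\|_1$, $\|\mathbf{w}\|_1=\sum_i|w_i|$. $q^i(\mathbf{x},\mathbf{v})$ is the probability that the chain with transition matrix $\mathcal{P}_{\mathbf{x}}$ started at $\mathbf{v}$ is absorbed in $\mathbf{e}^{(i)}$; $\tilde\mu_\infty^{\mathbf{x},\mathbf{v}}$ is the probability measure on $\chi$ with mass $q^i(\mathbf{x},\mathbf{v})$ at $\mathbf{e}^{(i)}$, $1\le i\le L$, and $0$ elsewhere. $\|\mu\|_{TV}:=\sum_{\mathbf{v}'\in\chi}|\mu(\mathbf{v}')|$. *)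

theory Defs
  imports "HOL-Probability.Probability"
begin

fun mpow :: "('v::finite \<Rightarrow> 'v \<Rightarrow> real) \<Rightarrow> nat \<Rightarrow> 'v \<Rightarrow> 'v \<Rightarrow> real" where
  "mpow p 0 v w = (if v = w then 1 else 0)"
| "mpow p (Suc n) v w = (\<Sum>u\<in>UNIV. mpow p n v u * p u w)"

(* probability that the chain started at v is absorbed in the absorbing state e:
   P[exists n. V_n = e] = lim_n P[V_n = e] for an absorbing state e *)
definition absorb_prob :: "('v::finite \<Rightarrow> 'v \<Rightarrow> real) \<Rightarrow> 'v \<Rightarrow> 'v \<Rightarrow> real" where
  "absorb_prob p v e = lim (\<lambda>n. mpow p n v e)"

definition mu_infty :: "('x \<Rightarrow> 'v::finite \<Rightarrow> 'v \<Rightarrow> real) \<Rightarrow> 'v set \<Rightarrow> 'x \<Rightarrow> 'v \<Rightarrow> 'v \<Rightarrow> real" where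
  "mu_infty P E x v w = (if w \<in> E then absorb_prob (P x) v w else 0)"

definition l1norm :: "real^'n \<Rightarrow> real" where
  "l1norm x = (\<Sum>i\<in>UNIV. \<bar>x $ i\<bar>)"

(* flow of the ODE y' = a(y,v), y(0) = x (globally defined under global Lipschitz) *)
definition flow :: "(real^'n \<Rightarrow> 'v \<Rightarrow> real^'n) \<Rightarrow> 'v \<Rightarrow> real \<Rightarrow> real^'n \<Rightarrow> real^'n" where
  "flow a v s x = (THE y. y 0 = x \<and> (\<forall>r. (y has_vector_derivative a (y r) v) (at r))) s"

definition enum_states :: "'v::finite list" where
  "enum_states = (SOME xs. distinct xs \<and> set xs = UNIV)"

(* choose a state with distribution p from a uniform u in [0,1] (inverse CDF) *)
definition choose_state :: "('v::finite \<Rightarrow> real) \<Rightarrow> real \<Rightarrow> 'v" where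
  "choose_state p u = (let xs = (enum_states :: 'v list) in
     xs ! (LEAST i. Suc i = length xs \<or> u < (\<Sum>j\<le>i. p (xs ! j))))"

(* noise: omega k = (k-th interarrival time of the rate-lambda Poisson clock,
   uniform variable used for the k-th jump); all independent *)
definition noise_space :: "real \<Rightarrow> (nat \<Rightarrow> real \<times> real) measure" where
  "noise_space lam = PiM UNIV (\<lambda>_::nat.
      pair_measure (density lborel (\<lambda>s. ennreal (exponential_density lam s)))
                   (uniform_measure lborel {0..1::real}))"

definition ring_time :: "(nat \<Rightarrow> real \<times> real) \<Rightarrow> nat \<Rightarrow> real" where
  "ring_time \<omega> k = (\<Sum>j<k. fst (\<omega> j))"

(* (X_{T_k}, V_{T_k}) : the state right after the k-th jump *)
fun jump_state :: "(real^'n \<Rightarrow> 'v \<Rightarrow> real^'n) \<Rightarrow> (real^'n \<Rightarrow> 'v::finite \<Rightarrow> 'v \<Rightarrow> real)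
    \<Rightarrow> (nat \<Rightarrow> real \<times> real) \<Rightarrow> real^'n \<Rightarrow> 'v \<Rightarrow> nat \<Rightarrow> (real^'n) \<times> 'v" where
  "jump_state a P \<omega> x v 0 = (x, v)"
| "jump_state a P \<omega> x v (Suc k) =
     (let (y, w) = jump_state a P \<omega> x v k;
          y' = flow a w (fst (\<omega> k)) y
      in (y', choose_state (P y' w) (snd (\<omega> k))))"

(* V_t(omega) = V_{T_k} for T_k <= t < T_{k+1} *)
definition V_proc :: "(real^'n \<Rightarrow> 'v \<Rightarrow> real^'n) \<Rightarrow> (real^'n \<Rightarrow> 'v::finite \<Rightarrow> 'v \<Rightarrow> real)
    \<Rightarrow> real^'n \<Rightarrow> 'v \<Rightarrow> real \<Rightarrow> (nat \<Rightarrow> real \<times> real) \<Rightarrow> 'v" where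
  "V_proc a P x v t \<omega> =
     (if \<exists>k. t < ring_time \<omega> (Suc k)
      then snd (jump_state a P \<omega> x v (LEAST k. t < ring_time \<omega> (Suc k)))
      else v)"

definition mu_t :: "(real^'n \<Rightarrow> 'v \<Rightarrow> real^'n) \<Rightarrow> (real^'n \<Rightarrow> 'v::finite \<Rightarrow> 'v \<Rightarrow> real)
    \<Rightarrow> real \<Rightarrow> real^'n \<Rightarrow> 'v \<Rightarrow> real \<Rightarrow> 'v \<Rightarrow> real" where
  "mu_t a P lam x v t w =
     measure (noise_space lam) {\<omega> \<in> space (noise_space lam). V_proc a P x v t \<omega> = w}"

definition tv_norm :: "('v::finite \<Rightarrow> real) \<Rightarrow> real" where
  "tv_norm \<mu> = (\<Sum>w\<in>UNIV. \<bar>\<mu> w\<bar>)"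

end

theory Submission
  imports Defs
begin


lemma cmp_bound:
  fixes D :: "real \<Rightarrow> 'a::euclidean_space" and \<phi> :: "real \<Rightarrow> real"
  assumes ab: "a \<le> b"
   and dD: "\<And>s. s \<in> {a..b} \<Longrightarrow> (D has_vector_derivative D' s) (at s within {a..b})"
   and d\<phi>: "\<And>s. s \<in> {a..b} \<Longrightarrow> (\<phi> has_vector_derivative \<phi>' s) (at s within {a..b})"
   and le: "\<And>s. s \<in> {a..b} \<Longrightarrow> norm (D' s) \<le> \<phi>' s"
  shows "norm (D b - D a) \<le> \<phi> b - \<phi> a"
proof -
  have 1: "(D' has_integral (D b - D a)) {a..b}"
    by (rule fundamental_theorem_of_calculus) (use ab dD in auto)
  have 2: "(\<phi>' has_integral (\<phi> b - \<phi> a)) {a..b}"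
    by (rule fundamental_theorem_of_calculus) (use ab d\<phi> in auto)
  have "norm (integral {a..b} D') \<le> integral {a..b} \<phi>'"
    by (rule integral_norm_bound_integral) (use 1 2 le in auto)
  then show ?thesis using 1 2 by (simp add: integral_unique)
qed

lemma cmp_abs:
  fixes D :: "real \<Rightarrow> 'a::euclidean_space" and \<psi> :: "real \<Rightarrow> real"
  assumes dD: "\<And>s. (D has_vector_derivative D' s) (at s)"
   and d\<psi>: "\<And>s. (\<psi> has_vector_derivative \<psi>' s) (at s)"
   and le: "\<And>s. \<bar>s\<bar> \<le> \<bar>r\<bar> \<Longrightarrow> norm (D' s) \<le> \<psi>' \<bar>s\<bar>"
  shows "norm (D r - D 0) \<le> \<psi> \<bar>r\<bar> - \<psi> 0"
proof (cases "r \<ge> 0")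
  case True
  have le': "norm (D' s) \<le> \<psi>' s" if "s \<in> {0..r}" for s
    using le[of s] that True by simp
  show ?thesis using True
    by (auto intro!: cmp_bound[where D'=D' and \<phi>'=\<psi>'] has_vector_derivative_at_within dD d\<psi> le')
next
  case False
  have d2: "((\<lambda>s. D (- s)) has_vector_derivative - D' (- s)) (at s)" for s
    using vector_diff_chain_at[OF has_vector_derivative_minus[OF has_vector_derivative_id] dD[of "-s"]]
    by (simp add: o_def)
  have le': "norm (D' (- s)) \<le> \<psi>' s" if "0 \<le> s" "s \<le> - r" for s
    using le[of "-s"] that by simp
  have "norm (D (- (- r)) - D (- 0)) \<le> \<psi> (- r) - \<psi> 0"
    using False
    by (intro cmp_bound[where D'="\<lambda>s. - D' (- s)" and \<phi>'=\<psi>'])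
       (auto intro!: has_vector_derivative_at_within d2 d\<psi> le')
  then show ?thesis using False by simp
qed

lemma lin_deriv: "((\<lambda>s::real. c * s) has_vector_derivative c) (at s within S)"
  using has_real_derivative_iff_has_vector_derivative[THEN iffD1, OF DERIV_cmult_Id[of c s]]
  by (rule has_vector_derivative_at_within)

lemma sol_step:
  fixes f :: "'a::euclidean_space \<Rightarrow> 'a"
  assumes lip: "\<And>u v. norm (f u - f v) \<le> L * norm (u - v)" and L: "L > 0"
    and y: "\<And>r. (y has_vector_derivative f (y r)) (at r)"
    and z: "\<And>r. (z has_vector_derivative f (z r)) (at r)"
    and r: "r0 \<le> r" "r \<le> r0 + 1/(2*L)"
  shows "norm (y r - z r) \<le> 2 * norm (y r0 - z r0)"
proof -
  define I where "I = {r0..r0 + 1/(2*L)}"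
  have cy: "continuous_on I (\<lambda>s. norm (y s - z s))"
    using y z by (intro continuous_at_imp_continuous_on ballI continuous_intros has_vector_derivative_continuous) 
  obtain rm where rm: "rm \<in> I" "\<And>s. s\<in>I \<Longrightarrow> norm (y s - z s) \<le> norm (y rm - z rm)"
    using continuous_attains_sup[OF _ _ cy] L unfolding I_def by auto
  define D where "D = norm (y rm - z rm)"
  have D0: "D \<ge> 0" unfolding D_def by simp
  have key: "norm (y s - z s) \<le> norm (y r0 - z r0) + D/2" if s: "s \<in> I" for s
  proof -
    have "norm ((y s - z s) - (y r0 - z r0)) \<le> L * D * s - L * D * r0"
    proof (rule cmp_bound[where D'="\<lambda>u. f (y u) - f (z u)" and \<phi>'="\<lambda>_. L*D"])
      show "r0 \<le> s" using s unfolding I_def by auto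
      show "((\<lambda>u. y u - z u) has_vector_derivative f (y u) - f (z u)) (at u within {r0..s})" for u
        using has_vector_derivative_diff[OF y[of u] z[of u]] by (rule has_vector_derivative_at_within)
      show "((\<lambda>u. L*D*u) has_vector_derivative L*D) (at u within {r0..s})" for u
        by (rule lin_deriv)
      show "norm (f (y u) - f (z u)) \<le> L * D" if "u \<in> {r0..s}" for u
      proof -
        have "u \<in> I" using that s unfolding I_def by auto
        then have "norm (y u - z u) \<le> D" using rm unfolding D_def by auto
        then have "L * norm (y u - z u) \<le> L * D" using L by (intro mult_left_mono) auto
        then show ?thesis using lip[of "y u" "z u"] by linarith
      qed
    qed
    also have "L * D * s - L * D * r0 = L * D * (s - r0)" by (simp add: algebra_simps)
    also have "\<dots> \<le> L*D*(1/(2*L))"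
      using s L D0 unfolding I_def by (intro mult_left_mono) auto
    also have "\<dots> = D/2" using L by simp
    finally have "norm ((y s - z s) - (y r0 - z r0)) \<le> D/2" .
    then show ?thesis using norm_triangle_sub[of "y s - z s" "y r0 - z r0"] by linarith
  qed
  from key[OF rm(1)] have "D \<le> 2 * norm (y r0 - z r0)" unfolding D_def by linarith
  moreover have "r \<in> I" using r unfolding I_def by auto
  ultimately show ?thesis using rm(2) unfolding D_def by fastforce
qed

lemma sol_stab_fwd:
  fixes f :: "'a::euclidean_space \<Rightarrow> 'a"
  assumes lip: "\<And>u v. norm (f u - f v) \<le> L * norm (u - v)" and L: "L > 0"
    and y: "\<And>r. (y has_vector_derivative f (y r)) (at r)"
    and z: "\<And>r. (z has_vector_derivative f (z r)) (at r)"
  shows "0 \<le> r \<Longrightarrow> r \<le> real k / (2*L) \<Longrightarrow> norm (y r - z r) \<le> 2^k * norm (y 0 - z 0)"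
proof (induction k arbitrary: r)
  case 0
  then have "r = 0" using L by simp
  then show ?case by simp
next
  case (Suc k)
  show ?case
  proof (cases "r \<le> real k / (2*L)")
    case True
    then have "norm (y r - z r) \<le> 2^k * norm (y 0 - z 0)" using Suc by auto
    also have "\<dots> \<le> 2^Suc k * norm (y 0 - z 0)" by simp
    finally show ?thesis .
  next
    case False
    have "norm (y r - z r) \<le> 2 * norm (y (real k / (2*L)) - z (real k / (2*L)))"
      apply (rule sol_step[OF lip L y z])
      using False Suc.prems L by (auto simp: field_simps)
    also have "\<dots> \<le> 2 * (2^k * norm (y 0 - z 0))"
      using Suc.IH[of "real k / (2*L)"] L by auto
    finally show ?thesis by simp
  qed
qed

lemma sol_mirror:
  assumes y: "\<And>r. (y has_vector_derivative f (y r)) (at r)"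
  shows "((\<lambda>s. y (- s)) has_vector_derivative - f (y (- r))) (at r)"
  using vector_diff_chain_at[OF has_vector_derivative_minus[OF has_vector_derivative_id] y[of "-r"]]
  by (simp add: o_def)

lemma sol_stab:
  fixes f :: "'a::euclidean_space \<Rightarrow> 'a"
  assumes lip: "\<And>u v. norm (f u - f v) \<le> L * norm (u - v)" and L: "L > 0"
    and y: "\<And>r. (y has_vector_derivative f (y r)) (at r)"
    and z: "\<And>r. (z has_vector_derivative f (z r)) (at r)"
    and r: "\<bar>r\<bar> \<le> real k / (2*L)"
  shows "norm (y r - z r) \<le> 2^k * norm (y 0 - z 0)"
proof (cases "r \<ge> 0")
  case True
  then show ?thesis using sol_stab_fwd[OF lip L y z] r by auto
next
  case False
  have lip': "norm ((\<lambda>u. - f u) u - (\<lambda>u. - f u) v) \<le> L * norm (u - v)" for u v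
    using lip[of u v] by (simp add: norm_minus_commute)
  have "norm ((\<lambda>s. y (- s)) (-r) - (\<lambda>s. z (- s)) (-r)) \<le> 2^k * norm ((\<lambda>s. y (- s)) 0 - (\<lambda>s. z (- s)) 0)"
    by (rule sol_stab_fwd[OF lip' L]) (use sol_mirror[OF y] sol_mirror[OF z] False r in auto)
  then show ?thesis by simp
qed

definition prim :: "(real \<Rightarrow> 'a::euclidean_space) \<Rightarrow> real \<Rightarrow> 'a" where
  "prim g r = integral {0..r} g - integral {r..0} g"

lemma prim_0[simp]: "prim g 0 = 0"
  by (simp add: prim_def)

lemma prim_deriv:
  fixes g :: "real \<Rightarrow> 'a::euclidean_space"
  assumes gc: "continuous_on UNIV g"
  shows "(prim g has_vector_derivative g r) (at r)"
proof -
  define R where "R = \<bar>r\<bar> + 1"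
  have cg: "continuous_on {-R..R} g" using gc continuous_on_subset by blast
  have int: "g integrable_on {-R..R}" by (rule integrable_continuous_real[OF cg])
  have eq: "integral {-R..s} g - integral {-R..0} g = prim g s" if "s \<in> {-R<..<R}" for s
  proof (cases "0 \<le> s")
    case True
    have "integral {-R..0} g + integral {0..s} g = integral {-R..s} g"
      by (rule Henstock_Kurzweil_Integration.integral_combine) (use True that R_def in \<open>auto intro: integrable_on_subinterval[OF int]\<close>)
    moreover have "integral {s..0} g = 0"
    proof (cases "s = 0")
      case True then show ?thesis by simp
    next
      case False then show ?thesis using \<open>0 \<le> s\<close> by simp
    qed
    ultimately show ?thesis unfolding prim_def by (simp add: algebra_simps)
  next
    case False
    have "integral {-R..s} g + integral {s..0} g = integral {-R..0} g"
      by (rule Henstock_Kurzweil_Integration.integral_combine) (use False that R_def in \<open>auto intro: integrable_on_subinterval[OF int]\<close>)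
    moreover have "integral {0..s} g = 0" using False by simp
    ultimately show ?thesis unfolding prim_def by (simp add: algebra_simps)
  qed
  have d: "((\<lambda>s. integral {-R..s} g - integral {-R..0} g) has_vector_derivative g r) (at r)"
  proof -
    have "((\<lambda>s. integral {-R..s} g) has_vector_derivative g r) (at r within {-R..R})"
      by (rule integral_has_vector_derivative[OF cg]) (auto simp: R_def)
    then have "((\<lambda>s. integral {-R..s} g) has_vector_derivative g r) (at r within {-R<..<R})"
      by (rule has_vector_derivative_within_subset) auto
    then have "((\<lambda>s. integral {-R..s} g) has_vector_derivative g r) (at r)"
      by (subst (asm) at_within_open) (auto simp: R_def)
    then show ?thesis using has_vector_derivative_diff[OF _ has_vector_derivative_const] by fastforce
  qed
  show ?thesis by (rule has_vector_derivative_transform_within_open[OF d, of "{-R<..<R}"]) (use eq R_def in auto)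
qed

lemma prim_step_deriv:
  fixes f :: "'a::euclidean_space \<Rightarrow> 'a"
  assumes fc: "continuous_on UNIV f" and hc: "continuous_on UNIV h"
  shows "((\<lambda>r. x + prim (\<lambda>s. f (h s)) r) has_vector_derivative f (h r)) (at r)"
proof -
  have "continuous_on UNIV (\<lambda>s. f (h s))"
    using continuous_on_compose2[OF fc hc] by auto
  from has_vector_derivative_add[OF has_vector_derivative_const prim_deriv[OF this]]
  show ?thesis by simp
qed

fun pic :: "('a::euclidean_space \<Rightarrow> 'a) \<Rightarrow> 'a \<Rightarrow> nat \<Rightarrow> real \<Rightarrow> 'a" where
  "pic f x 0 = (\<lambda>r. x)"
| "pic f x (Suc k) = (\<lambda>r. x + prim (\<lambda>s. f (pic f x k s)) r)"

lemma pic0[simp]: "pic f x k 0 = x"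
  by (cases k) auto

lemma pic_cont:
  assumes fc: "continuous_on UNIV f"
  shows "continuous_on UNIV (pic f x k)"
proof (induction k)
  case 0 then show ?case by simp
next
  case (Suc k)
  show ?case
    using prim_step_deriv[OF fc Suc, of x]
    by (auto intro!: continuous_at_imp_continuous_on has_vector_derivative_continuous)
qed

lemma pic_deriv:
  assumes fc: "continuous_on UNIV f"
  shows "(pic f x (Suc k) has_vector_derivative f (pic f x k r)) (at r)"
  using prim_step_deriv[OF fc pic_cont[OF fc]] by simp

definition psi :: "real \<Rightarrow> real \<Rightarrow> nat \<Rightarrow> real \<Rightarrow> real" where
  "psi M L k \<rho> = M * L^k * \<rho>^Suc k / fact (Suc k)"

definition dpsi :: "real \<Rightarrow> real \<Rightarrow> nat \<Rightarrow> real \<Rightarrow> real" where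
  "dpsi M L k \<rho> = M * L^k * \<rho>^k / fact k"

lemma psi_deriv: "(psi M L k has_vector_derivative dpsi M L k \<rho>) (at \<rho>)"
proof -
  have "DERIV (psi M L k) \<rho> :> M * L^k * (real (Suc k) * \<rho>^k) / fact (Suc k)"
    unfolding psi_def by (intro derivative_eq_intros) auto
  also have "M * L^k * (real (Suc k) * \<rho>^k) / fact (Suc k) = dpsi M L k \<rho>"
  proof -
    have "real (Suc k) / fact (Suc k) = 1 / (fact k :: real)"
      by (simp add: fact_Suc del: of_nat_Suc)
    then show ?thesis unfolding dpsi_def by (metis (no_types, lifting) times_divide_eq_right mult.assoc mult.commute times_divide_eq_left mult_1)
  qed
  finally show ?thesis by (simp add: has_real_derivative_iff_has_vector_derivative)
qed

lemma pic_diff: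
  fixes f :: "'a::euclidean_space \<Rightarrow> 'a"
  assumes fc: "continuous_on UNIV f" and bnd: "\<And>u. norm (f u) \<le> M"
    and lip: "\<And>u v. norm (f u - f v) \<le> L * norm (u - v)" and L: "L > 0"
  shows "norm (pic f x (Suc k) r - pic f x k r) \<le> psi M L k \<bar>r\<bar>"
proof (induction k arbitrary: r)
  case 0
  have "norm ((\<lambda>r. pic f x (Suc 0) r - x) r - (\<lambda>r. pic f x (Suc 0) r - x) 0) \<le> psi M L 0 \<bar>r\<bar> - psi M L 0 0"
  proof (rule cmp_abs[where D'="\<lambda>_. f x"])
    show "((\<lambda>r. pic f x (Suc 0) r - x) has_vector_derivative f x) (at s)" for s
      using has_vector_derivative_diff[OF pic_deriv[OF fc, of x 0 s] has_vector_derivative_const[of x]] by (simp only: pic.simps(1) diff_zero)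
    show "(psi M L 0 has_vector_derivative dpsi M L 0 s) (at s)" for s by (rule psi_deriv)
    show "norm (f x) \<le> dpsi M L 0 \<bar>s\<bar>" for s using bnd by (simp add: dpsi_def)
  qed
  then show ?case by (simp add: psi_def)
next
  case (Suc k)
  have "norm ((\<lambda>r. pic f x (Suc (Suc k)) r - pic f x (Suc k) r) r - (\<lambda>r. pic f x (Suc (Suc k)) r - pic f x (Suc k) r) 0)
      \<le> psi M L (Suc k) \<bar>r\<bar> - psi M L (Suc k) 0"
  proof (rule cmp_abs[where D'="\<lambda>s. f (pic f x (Suc k) s) - f (pic f x k s)"])
    show "((\<lambda>r. pic f x (Suc (Suc k)) r - pic f x (Suc k) r) has_vector_derivative f (pic f x (Suc k) s) - f (pic f x k s)) (at s)" for s
      using has_vector_derivative_diff[OF pic_deriv[OF fc, of x "Suc k" s] pic_deriv[OF fc, of x k s]] by simp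
    show "(psi M L (Suc k) has_vector_derivative dpsi M L (Suc k) s) (at s)" for s by (rule psi_deriv)
    show "norm (f (pic f x (Suc k) s) - f (pic f x k s)) \<le> dpsi M L (Suc k) \<bar>s\<bar>" for s
    proof -
      have "L * norm (pic f x (Suc k) s - pic f x k s) \<le> L * psi M L k \<bar>s\<bar>"
        using Suc.IH[of s] L by (intro mult_left_mono) auto
      also have "\<dots> = dpsi M L (Suc k) \<bar>s\<bar>" by (simp add: psi_def dpsi_def)
      finally show ?thesis using lip[of "pic f x (Suc k) s" "pic f x k s"] by linarith
    qed
  qed
  then show ?case by (simp add: psi_def)
qed

context
  fixes f :: "'a::euclidean_space \<Rightarrow> 'a" and M L :: real
  assumes fc: "continuous_on UNIV f" and bnd: "\<And>u. norm (f u) \<le> M"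
    and lip: "\<And>u v. norm (f u - f v) \<le> L * norm (u - v)" and L: "L > 0"
begin

lemma M_nonneg: "M \<ge> 0" using bnd[of 0] norm_ge_zero order_trans by blast

lemma psi_summable: "summable (\<lambda>k. psi M L k \<rho>)"
proof -
  have "summable (\<lambda>n. inverse (fact n) * (L*\<rho>)^n)" by (rule summable_exp)
  then have "summable (\<lambda>n. inverse (fact (n+1)) * (L*\<rho>)^(n+1))"
    by (rule summable_ignore_initial_segment)
  then have "summable (\<lambda>n. (M/L) * (inverse (fact (n+1)) * (L*\<rho>)^(n+1)))"
    by (rule summable_mult)
  moreover have "(M/L) * (inverse (fact (n+1)) * (L*\<rho>)^(n+1)) = psi M L n \<rho>" for n
    using L by (simp add: psi_def power_mult_distrib field_simps)
  ultimately show ?thesis by simp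
qed

lemma psi_mono: "0 \<le> \<rho> \<Longrightarrow> \<rho> \<le> \<rho>' \<Longrightarrow> psi M L k \<rho> \<le> psi M L k \<rho>'"
  unfolding psi_def using M_nonneg L
  by (intro divide_right_mono mult_left_mono power_mono) auto

lemma d_summable: "summable (\<lambda>j. pic f x (Suc j) r - pic f x j r)"
  by (rule summable_comparison_test'[OF psi_summable[of "\<bar>r\<bar>"]]) (use pic_diff[OF fc bnd lip L] in auto)

definition ysol :: "'a \<Rightarrow> real \<Rightarrow> 'a" where
  "ysol x r = x + (\<Sum>j. pic f x (Suc j) r - pic f x j r)"

lemma pic_telescope: "pic f x k r = x + (\<Sum>j<k. pic f x (Suc j) r - pic f x j r)"
proof -
  have "(\<Sum>j<k. pic f x (Suc j) r - pic f x j r) = pic f x k r - pic f x 0 r"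
    by (rule sum_lessThan_telescope)
  then show ?thesis by (metis add.commute diff_add_cancel pic.simps(1))
qed

lemma pic_lim: "(\<lambda>k. pic f x k r) \<longlonglongrightarrow> ysol x r"
proof -
  have e: "(\<lambda>k. pic f x k r) = (\<lambda>k. x + (\<Sum>j<k. pic f x (Suc j) r - pic f x j r))"
    by (rule ext) (rule pic_telescope)
  show ?thesis unfolding e ysol_def by (intro tendsto_add tendsto_const summable_LIMSEQ d_summable)
qed

lemma tail_bound: "norm (ysol x r - pic f x k r) \<le> (\<Sum>j. psi M L (j + k) \<bar>r\<bar>)"
proof -
  have "ysol x r - pic f x k r = (\<Sum>j. pic f x (Suc (j+k)) r - pic f x (j+k) r)"
  proof -
    have "(\<Sum>j. pic f x (Suc (j+k)) r - pic f x (j+k) r) = (\<Sum>j. pic f x (Suc j) r - pic f x j r) - (\<Sum>j<k. pic f x (Suc j) r - pic f x j r)"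
      using suminf_minus_initial_segment[OF d_summable[of x r], of k] by (simp only: add_Suc)
    then show ?thesis unfolding ysol_def pic_telescope[of x k r] by (simp only: add_diff_cancel_left)
  qed
  also have "norm \<dots> \<le> (\<Sum>j. psi M L (j + k) \<bar>r\<bar>)"
  proof (rule norm_suminf_le)
    show "norm (pic f x (Suc (j+k)) r - pic f x (j+k) r) \<le> psi M L (j+k) \<bar>r\<bar>" for j
      by (rule pic_diff[OF fc bnd lip L])
    show "summable (\<lambda>j. psi M L (j+k) \<bar>r\<bar>)" by (rule summable_ignore_initial_segment[OF psi_summable])
  qed
  finally show ?thesis .
qed

lemma tail_mono: assumes "0 \<le> \<rho>" "\<rho> \<le> \<rho>'" shows "(\<Sum>j. psi M L (j + k) \<rho>) \<le> (\<Sum>j. psi M L (j + k) \<rho>')"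
proof (rule suminf_le)
  show "psi M L (j + k) \<rho> \<le> psi M L (j + k) \<rho>'" for j
    by (rule psi_mono[OF assms])
qed (auto intro!: summable_ignore_initial_segment[OF psi_summable])

lemma tail_lim: "(\<lambda>k. \<Sum>j. psi M L (j + k) \<rho>) \<longlonglongrightarrow> 0"
proof -
  have "(\<lambda>k. (\<Sum>j. psi M L j \<rho>) - (\<Sum>j<k. psi M L j \<rho>)) \<longlonglongrightarrow> (\<Sum>j. psi M L j \<rho>) - (\<Sum>j. psi M L j \<rho>)"
    by (intro tendsto_diff tendsto_const summable_LIMSEQ psi_summable)
  then show ?thesis using suminf_minus_initial_segment[OF psi_summable] by simp
qed

lemma pic_lip: "norm (pic f x k r - pic f x k s) \<le> M * \<bar>r - s\<bar>"
proof (cases k)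
  case 0 then show ?thesis using M_nonneg by simp
next
  case (Suc j)
  have *: "norm (pic f x (Suc j) b - pic f x (Suc j) a) \<le> M * b - M * a" if "a \<le> b" for a b
    by (rule cmp_bound[where D'="\<lambda>s. f (pic f x j s)" and \<phi>'="\<lambda>_. M"])
       (use that in \<open>auto intro!: has_vector_derivative_at_within pic_deriv[OF fc] lin_deriv bnd simp del: pic.simps\<close>)
  show ?thesis
  proof (cases "s \<le> r")
    case True
    then have e: "M * \<bar>r - s\<bar> = M * r - M * s" by (simp add: algebra_simps)
    show ?thesis unfolding e Suc by (rule *[OF True])
  next
    case False
    then have e: "M * \<bar>r - s\<bar> = M * s - M * r" by (simp add: algebra_simps)
    show ?thesis unfolding e Suc norm_minus_commute[of "pic f x (Suc j) r"] by (rule *) (use False in simp)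
  qed
qed

lemma ysol_lip: "norm (ysol x r - ysol x s) \<le> M * \<bar>r - s\<bar>"
proof -
  have "(\<lambda>k. norm (pic f x k r - pic f x k s)) \<longlonglongrightarrow> norm (ysol x r - ysol x s)"
    by (intro tendsto_intros pic_lim)
  then show ?thesis by (rule LIMSEQ_le_const2) (auto intro: pic_lip)
qed

lemma ysol_cont: "continuous_on UNIV (ysol x)"
proof -
  have "M-lipschitz_on UNIV (ysol x)"
    by (rule lipschitz_onI) (use ysol_lip M_nonneg in \<open>auto simp: dist_norm dist_real_def\<close>)
  then show ?thesis by (rule lipschitz_on_continuous_on)
qed

lemma ysol_fix: "ysol x r = x + prim (\<lambda>s. f (ysol x s)) r"
proof -
  have 1: "(\<lambda>k. pic f x (Suc k) r) \<longlonglongrightarrow> ysol x r" using LIMSEQ_Suc[OF pic_lim] .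
  have cp: "continuous_on UNIV (\<lambda>s. f (pic f x k s))" for k
    using continuous_on_compose2[OF fc pic_cont[OF fc]] by auto
  have cy: "continuous_on UNIV (\<lambda>s. f (ysol x s))"
    using continuous_on_compose2[OF fc ysol_cont] by auto
  have 2: "(\<lambda>k. prim (\<lambda>s. f (pic f x k s)) r - prim (\<lambda>s. f (ysol x s)) r) \<longlonglongrightarrow> 0"
  proof (rule Lim_null_comparison)
    show "\<forall>\<^sub>F k in sequentially. norm (prim (\<lambda>s. f (pic f x k s)) r - prim (\<lambda>s. f (ysol x s)) r) \<le> L * (\<Sum>j. psi M L (j + k) \<bar>r\<bar>) * \<bar>r\<bar>"
    proof (intro always_eventually allI)
      fix k
      define T where "T = (\<Sum>j. psi M L (j + k) \<bar>r\<bar>)"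
      have "norm ((\<lambda>r. prim (\<lambda>s. f (pic f x k s)) r - prim (\<lambda>s. f (ysol x s)) r) r
          - (\<lambda>r. prim (\<lambda>s. f (pic f x k s)) r - prim (\<lambda>s. f (ysol x s)) r) 0) \<le> (L * T) * \<bar>r\<bar> - (L * T) * 0"
      proof (rule cmp_abs[where D'="\<lambda>s. f (pic f x k s) - f (ysol x s)"])
        show "((\<lambda>r. prim (\<lambda>s. f (pic f x k s)) r - prim (\<lambda>s. f (ysol x s)) r) has_vector_derivative
            f (pic f x k s) - f (ysol x s)) (at s)" for s
          by (intro has_vector_derivative_diff prim_deriv cp cy)
        show "((\<lambda>\<rho>. L * T * \<rho>) has_vector_derivative L * T) (at s)" for s
          using lin_deriv[where S=UNIV] by simp
        show "norm (f (pic f x k s) - f (ysol x s)) \<le> L * T" if "\<bar>s\<bar> \<le> \<bar>r\<bar>" for s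
        proof -
          have "norm (pic f x k s - ysol x s) \<le> (\<Sum>j. psi M L (j + k) \<bar>s\<bar>)"
            using tail_bound[of x s k] by (simp add: norm_minus_commute)
          also have "\<dots> \<le> T" unfolding T_def using that by (intro tail_mono) auto
          finally have "L * norm (pic f x k s - ysol x s) \<le> L * T" using L by (intro mult_left_mono) auto
          then show ?thesis using lip[of "pic f x k s" "ysol x s"] by linarith
        qed
      qed
      then show "norm (prim (\<lambda>s. f (pic f x k s)) r - prim (\<lambda>s. f (ysol x s)) r) \<le> L * T * \<bar>r\<bar>"
        by simp
    qed
    show "(\<lambda>k. L * (\<Sum>j. psi M L (j + k) \<bar>r\<bar>) * \<bar>r\<bar>) \<longlonglongrightarrow> 0"
      using tendsto_mult[OF tendsto_mult[OF tendsto_const tail_lim] tendsto_const, of L "\<bar>r\<bar>" "\<bar>r\<bar>"] by simp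
  qed
  have 3: "(\<lambda>k. pic f x (Suc k) r) \<longlonglongrightarrow> x + prim (\<lambda>s. f (ysol x s)) r"
  proof -
    have "(\<lambda>k. x + prim (\<lambda>s. f (ysol x s)) r + (prim (\<lambda>s. f (pic f x k s)) r - prim (\<lambda>s. f (ysol x s)) r))
       \<longlonglongrightarrow> x + prim (\<lambda>s. f (ysol x s)) r + 0"
      by (intro tendsto_add tendsto_const 2)
    then show ?thesis by simp
  qed
  from LIMSEQ_unique[OF 1 3] show ?thesis .
qed

lemma ysol_0: "ysol x 0 = x"
  using ysol_fix[of x 0] by simp

lemma ysol_deriv: "(ysol x has_vector_derivative f (ysol x r)) (at r)"
proof -
  have "((\<lambda>r. x + prim (\<lambda>s. f (ysol x s)) r) has_vector_derivative f (ysol x r)) (at r)"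
    by (rule prim_step_deriv[OF fc ysol_cont])
  then show ?thesis
    by (rule has_vector_derivative_transform_within_open[OF _ open_UNIV UNIV_I]) (rule ysol_fix[symmetric])
qed

lemma ode_ex1: "\<exists>!y. y 0 = x \<and> (\<forall>r. (y has_vector_derivative f (y r)) (at r))"
proof (rule ex1I[of _ "ysol x"])
  show "ysol x 0 = x \<and> (\<forall>r. (ysol x has_vector_derivative f (ysol x r)) (at r))"
    using ysol_0 ysol_deriv by auto
  fix y assume y: "y 0 = x \<and> (\<forall>r. (y has_vector_derivative f (y r)) (at r))"
  show "y = ysol x"
  proof
    fix r
    obtain k :: nat where k: "\<bar>r\<bar> * (2*L) \<le> k" using real_arch_simple by blast
    then have "\<bar>r\<bar> \<le> real k / (2*L)" using L by (simp add: field_simps)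
    moreover have y': "\<And>r. (y has_vector_derivative f (y r)) (at r)" using y by auto
    ultimately have "norm (y r - ysol x r) \<le> 2^k * norm (y 0 - ysol x 0)"
      using sol_stab[OF lip L y' ysol_deriv] by blast
    then show "y r = ysol x r" using y ysol_0 by simp
  qed
qed

lemma sol_disp:
  assumes y: "\<And>r. (y has_vector_derivative f (y r)) (at r)"
  shows "norm (y r - y 0) \<le> M * \<bar>r\<bar>"
proof -
  have "norm (y r - y 0) \<le> M * \<bar>r\<bar> - M * 0"
    by (rule cmp_abs[where D'="\<lambda>s. f (y s)" and \<psi>'="\<lambda>_. M"]) (auto intro: y lin_deriv bnd)
  then show ?thesis by simp
qed

end


definition Expm :: "real \<Rightarrow> real measure" where
  "Expm lam = density lborel (\<lambda>s. ennreal (exponential_density lam s))"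
definition Unif :: "real measure" where
  "Unif = uniform_measure lborel {0..1::real}"
definition M0 :: "real \<Rightarrow> (real \<times> real) measure" where
  "M0 lam = Expm lam \<Otimes>\<^sub>M Unif"

lemma noise_eq: "noise_space lam = PiM UNIV (\<lambda>_. M0 lam)"
  by (simp add: noise_space_def M0_def Expm_def Unif_def)

lemma prob_Expm: "lam > 0 \<Longrightarrow> prob_space (Expm lam)"
  unfolding Expm_def using prob_space_exponential_density by simp

lemma prob_Unif: "prob_space Unif"
  unfolding Unif_def by (rule prob_space_uniform_measure) auto

lemma prob_M0: "lam > 0 \<Longrightarrow> prob_space (M0 lam)"
  unfolding M0_def by (intro prob_space_pair prob_Expm prob_Unif)

lemma sets_Expm[simp, measurable_cong]: "sets (Expm lam) = sets borel"
  by (simp add: Expm_def)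
lemma space_Expm[simp]: "space (Expm lam) = UNIV"
  by (simp add: Expm_def)
lemma sets_Unif[simp, measurable_cong]: "sets Unif = sets borel"
  by (simp add: Unif_def)
lemma space_Unif[simp]: "space Unif = UNIV"
  by (simp add: Unif_def)
lemma sets_M0[measurable_cong]: "sets (M0 lam) = sets (borel \<Otimes>\<^sub>M borel)"
  unfolding M0_def by (rule sets_pair_measure_cong) auto
lemma space_M0[simp]: "space (M0 lam) = UNIV"
  by (simp add: M0_def space_pair_measure)

lemma fst_M0[measurable]: "fst \<in> borel_measurable (M0 lam)"
  using measurable_fst[of "borel::real measure" "borel::real measure"]
  by (simp add: measurable_cong_sets[OF sets_M0 refl])
lemma snd_M0[measurable]: "snd \<in> borel_measurable (M0 lam)"
  using measurable_snd[of "borel::real measure" "borel::real measure"]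
  by (simp add: measurable_cong_sets[OF sets_M0 refl])

lemma comp_meas[measurable]: "(\<lambda>\<omega>. \<omega> k) \<in> measurable (noise_space lam) (M0 lam)"
  unfolding noise_eq by (rule measurable_component_singleton) simp

lemma tau_meas[measurable]: "(\<lambda>\<omega>. fst (\<omega> k)) \<in> borel_measurable (noise_space lam)"
  by (rule measurable_compose[OF comp_meas fst_M0])
lemma u_meas[measurable]: "(\<lambda>\<omega>. snd (\<omega> k)) \<in> borel_measurable (noise_space lam)"
  by (rule measurable_compose[OF comp_meas snd_M0])

lemma REC:
  assumes lam: "lam > 0" and A: "A \<in> sets (noise_space lam)"
  shows "emeasure (noise_space lam) A =
    (\<integral>\<^sup>+ s. emeasure (noise_space lam) {\<omega> \<in> space (noise_space lam). case_nat s \<omega> \<in> A} \<partial>M0 lam)"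
proof -
  interpret prob_space "M0 lam" by (rule prob_M0[OF lam])
  interpret S: sequence_space "M0 lam" ..
  let ?f = "\<lambda>(s, \<omega>). case_nat s \<omega>"
  have D: "distr (M0 lam \<Otimes>\<^sub>M S.S) S.S ?f = S.S" by (rule S.PiM_iter)
  have mf: "?f \<in> measurable (M0 lam \<Otimes>\<^sub>M S.S) S.S" by measurable
  have A': "A \<in> sets S.S" using A by (simp add: noise_eq)
  have "emeasure S.S A = emeasure (distr (M0 lam \<Otimes>\<^sub>M S.S) S.S ?f) A" by (simp add: D)
  also have "\<dots> = emeasure (M0 lam \<Otimes>\<^sub>M S.S) (?f -` A \<inter> space (M0 lam \<Otimes>\<^sub>M S.S))"
    by (rule emeasure_distr[OF mf A'])
  also have "\<dots> = (\<integral>\<^sup>+ s. emeasure S.S (Pair s -` (?f -` A \<inter> space (M0 lam \<Otimes>\<^sub>M S.S))) \<partial>M0 lam)"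
    by (rule S.emeasure_pair_measure_alt) (use mf A' in auto)
  also have "\<dots> = (\<integral>\<^sup>+ s. emeasure S.S {\<omega> \<in> space S.S. case_nat s \<omega> \<in> A} \<partial>M0 lam)"
    by (intro nn_integral_cong arg_cong2[where f=emeasure] refl) (auto simp: space_pair_measure)
  finally show ?thesis by (simp add: noise_eq)
qed

lemma M0_fubini:
  assumes lam: "lam > 0" and g: "g \<in> borel_measurable (M0 lam)"
  shows "(\<integral>\<^sup>+ s. g s \<partial>M0 lam) = (\<integral>\<^sup>+ \<tau>. \<integral>\<^sup>+ u. g (\<tau>, u) \<partial>Unif \<partial>Expm lam)"
proof -
  interpret E: prob_space "Expm lam" by (rule prob_Expm[OF lam])
  interpret U: prob_space Unif by (rule prob_Unif)
  interpret pair_sigma_finite "Expm lam" Unif ..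
  show ?thesis using U.nn_integral_fst[of g "Expm lam"] g by (simp add: M0_def)
qed

lemma M0_snd:
  assumes lam: "lam > 0" and h[measurable]: "h \<in> borel_measurable borel"
  shows "(\<integral>\<^sup>+ s. h (snd s) \<partial>M0 lam) = (\<integral>\<^sup>+ u. h u \<partial>Unif)"
proof -
  interpret E: prob_space "Expm lam" by (rule prob_Expm[OF lam])
  have "(\<integral>\<^sup>+ s. h (snd s) \<partial>M0 lam) = (\<integral>\<^sup>+ \<tau>. \<integral>\<^sup>+ u. h u \<partial>Unif \<partial>Expm lam)"
    by (subst M0_fubini[OF lam]) auto
  also have "\<dots> = (\<integral>\<^sup>+ u. h u \<partial>Unif)" using E.emeasure_space_1 by simp
  finally show ?thesis .
qed

lemma M0_fst:
  assumes lam: "lam > 0" and h[measurable]: "h \<in> borel_measurable borel"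
  shows "(\<integral>\<^sup>+ s. h (fst s) \<partial>M0 lam) = (\<integral>\<^sup>+ \<tau>. h \<tau> \<partial>Expm lam)"
proof -
  interpret U: prob_space Unif by (rule prob_Unif)
  have "(\<integral>\<^sup>+ s. h (fst s) \<partial>M0 lam) = (\<integral>\<^sup>+ \<tau>. \<integral>\<^sup>+ u. h \<tau> \<partial>Unif \<partial>Expm lam)"
    by (subst M0_fubini[OF lam]) auto
  also have "\<dots> = (\<integral>\<^sup>+ \<tau>. h \<tau> \<partial>Expm lam)" using U.emeasure_space_1 by simp
  finally show ?thesis .
qed

lemma mgf:
  assumes lam: "lam > 0" and th: "\<theta> < lam"
  shows "(\<integral>\<^sup>+ \<tau>. ennreal (exp (\<theta> * \<tau>)) \<partial>Expm lam) = ennreal (lam / (lam - \<theta>))"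
proof -
  have "(\<integral>\<^sup>+ \<tau>. ennreal (exp (\<theta> * \<tau>)) \<partial>Expm lam)
      = (\<integral>\<^sup>+ x. ennreal (exponential_density lam x) * ennreal (exp (\<theta> * x)) \<partial>lborel)"
    unfolding Expm_def by (rule nn_integral_density) auto
  also have "\<dots> = (\<integral>\<^sup>+ x. ennreal (lam / (lam - \<theta>)) * ennreal (exponential_density (lam - \<theta>) x) \<partial>lborel)"
  proof (rule nn_integral_cong)
    fix x :: real
    have "exponential_density lam x * exp (\<theta> * x) = lam / (lam - \<theta>) * exponential_density (lam - \<theta>) x"
    proof (cases "x < 0")
      case True then show ?thesis by (simp add: exponential_density_def)
    next
      case False
      have "exp (- x * lam) * exp (\<theta> * x) = exp (- x * (lam - \<theta>))" by (simp add: exp_add[symmetric] algebra_simps)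
      then show ?thesis using False th by (simp add: exponential_density_def field_simps)
    qed
    then show "ennreal (exponential_density lam x) * ennreal (exp (\<theta> * x)) = ennreal (lam / (lam - \<theta>)) * ennreal (exponential_density (lam - \<theta>) x)"
      using lam th by (simp add: ennreal_mult[symmetric] exponential_density_nonneg)
  qed
  also have "\<dots> = ennreal (lam / (lam - \<theta>)) * (\<integral>\<^sup>+ x. ennreal (exponential_density (lam - \<theta>) x) \<partial>lborel)"
    by (rule nn_integral_cmult) auto
  also have "(\<integral>\<^sup>+ x. ennreal (exponential_density (lam - \<theta>) x) \<partial>lborel) = 1"
  proof -
    interpret prob_space "density lborel (\<lambda>x. ennreal (exponential_density (lam - \<theta>) x))"
      using prob_space_exponential_density[of "lam - \<theta>"] th by simp
    have "1 = emeasure (density lborel (\<lambda>x. ennreal (exponential_density (lam - \<theta>) x))) UNIV"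
      using emeasure_space_1 by simp
    also have "\<dots> = (\<integral>\<^sup>+ x. ennreal (exponential_density (lam - \<theta>) x) \<partial>lborel)"
      by (subst emeasure_density) auto
    finally show ?thesis by simp
  qed
  finally show ?thesis by simp
qed

lemma AE_Expm: "AE \<tau> in Expm lam. 0 \<le> \<tau>"
  unfolding Expm_def by (subst AE_density) (auto simp: exponential_density_def)

lemma AE_Unif: "AE u in Unif. 0 \<le> u \<and> u < 1"
  unfolding Unif_def
  by (subst AE_uniform_measure) (use AE_lborel_singleton[of "1::real"] in \<open>auto elim!: eventually_mono\<close>)

lemma AE_M0: assumes lam: "lam > 0" shows "AE s in M0 lam. 0 \<le> fst s \<and> 0 \<le> snd s \<and> snd s < 1"
proof -
  interpret E: prob_space "Expm lam" by (rule prob_Expm[OF lam])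
  interpret U: prob_space Unif by (rule prob_Unif)
  interpret pair_sigma_finite "Expm lam" Unif ..
  have "AE s in Expm lam \<Otimes>\<^sub>M Unif. 0 \<le> fst s \<and> 0 \<le> snd s \<and> snd s < 1"
  proof (rule AE_pair_measure)
    show "{x \<in> space (Expm lam \<Otimes>\<^sub>M Unif). 0 \<le> fst x \<and> 0 \<le> snd x \<and> snd x < 1} \<in> sets (Expm lam \<Otimes>\<^sub>M Unif)"
      by measurable
    show "AE x in Expm lam. AE y in Unif. 0 \<le> fst (x, y) \<and> 0 \<le> snd (x, y) \<and> snd (x, y) < 1"
      using AE_Expm[of lam] by eventually_elim (use AE_Unif in auto)
  qed
  then show ?thesis by (simp only: M0_def)
qed

lemma AE_good:
  assumes lam: "lam > 0"
  shows "AE \<omega> in noise_space lam. \<forall>k. 0 \<le> fst (\<omega> k) \<and> 0 \<le> snd (\<omega> k) \<and> snd (\<omega> k) < 1"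
  unfolding noise_eq AE_all_countable
  by (intro allI AE_PiM_component prob_M0 lam AE_M0) auto


lemma enum_ok: "distinct (enum_states::'v::finite list) \<and> set (enum_states::'v list) = UNIV"
  unfolding enum_states_def by (rule someI_ex) (use finite_distinct_list[of "UNIV::'v set"] in auto)

abbreviation LL :: "'v::finite itself \<Rightarrow> nat" where "LL _ \<equiv> length (enum_states :: 'v list)"

lemma len_enum: "length (enum_states :: 'v::finite list) = card (UNIV :: 'v set)"
  using enum_ok[where 'v='v] distinct_card by metis

lemma len_enum_pos: "length (enum_states :: 'v::finite list) > 0"
  unfolding len_enum by simp

lemma sum_enum: fixes f :: "'v::finite \<Rightarrow> 'a::comm_monoid_add" shows "(\<Sum>j<length (enum_states :: 'v::finite list). f (enum_states ! j)) = (\<Sum>v\<in>UNIV. f v)"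
proof -
  have "(\<Sum>j<length (enum_states :: 'v list). f (enum_states ! j)) = sum_list (map f (enum_states :: 'v list))"
    by (simp add: sum_list_sum_nth atLeast0LessThan)
  also have "\<dots> = sum f (set (enum_states :: 'v list))"
    using enum_ok[where 'v='v] by (simp add: sum_list_distinct_conv_sum_set)
  finally show ?thesis using enum_ok[where 'v='v] by simp
qed

definition Dc :: "('v::finite \<Rightarrow> real) \<Rightarrow> nat \<Rightarrow> real" where
  "Dc p i = (\<Sum>j<i. p (enum_states ! j))"

lemma Dc_mono: "(\<And>v. p v \<ge> 0) \<Longrightarrow> j \<le> k \<Longrightarrow> Dc p j \<le> Dc p k"
  unfolding Dc_def by (rule sum_mono2) auto

lemma Dc_nonneg: "(\<And>v. p v \<ge> 0) \<Longrightarrow> Dc p j \<ge> 0"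
  unfolding Dc_def by (rule sum_nonneg) auto

lemma Dc_L: fixes p :: "'v::finite \<Rightarrow> real" shows "Dc p (length (enum_states :: 'v::finite list)) = (\<Sum>v\<in>UNIV. p v)"
  unfolding Dc_def by (rule sum_enum)

lemma Dc_Suc: "Dc p (Suc i) = Dc p i + p (enum_states ! i)"
  unfolding Dc_def by simp

lemma choose_eq_Least: fixes p :: "'v::finite \<Rightarrow> real" shows
  "choose_state p u = enum_states ! (LEAST k. Suc k = length (enum_states :: 'v::finite list) \<or> u < Dc p (Suc k))"
  unfolding choose_state_def Let_def Dc_def by (simp add: lessThan_Suc_atMost)

lemma choose_char:
  fixes p :: "'v::finite \<Rightarrow> real"
  assumes nn: "\<And>v. p v \<ge> 0" and s1: "(\<Sum>v\<in>UNIV. p v) = 1" and u: "0 \<le> u" "u < 1"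
    and i: "i < length (enum_states::'v list)"
  shows "choose_state p u = enum_states ! i \<longleftrightarrow> Dc p i \<le> u \<and> u < Dc p (Suc i)"
proof -
  define L where "L = length (enum_states::'v list)"
  define Pr where "Pr k \<longleftrightarrow> Suc k = L \<or> u < Dc p (Suc k)" for k
  have L0: "L > 0" unfolding L_def by (rule len_enum_pos)
  have DL: "Dc p L = 1" unfolding L_def Dc_L s1 ..
  have Pr_iff: "Pr k \<longleftrightarrow> u < Dc p (Suc k)" if "k < L" for k
  proof -
    have "Suc k = L \<Longrightarrow> u < Dc p (Suc k)" using DL u by simp
    then show ?thesis unfolding Pr_def by auto
  qed
  have ch: "choose_state p u = enum_states ! (LEAST k. Pr k)"
    unfolding choose_eq_Least Pr_def L_def ..
  have ex: "Pr (L - 1)" unfolding Pr_def using L0 by simp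
  have mL: "(LEAST k. Pr k) < L" using Least_le[of Pr "L - 1", OF ex] L0 by linarith
  have "choose_state p u = enum_states ! i \<longleftrightarrow> (LEAST k. Pr k) = i"
    unfolding ch using nth_eq_iff_index_eq[of "enum_states::'v list"] enum_ok[where 'v='v] mL i
    unfolding L_def by blast
  also have "\<dots> \<longleftrightarrow> Dc p i \<le> u \<and> u < Dc p (Suc i)"
  proof
    assume m: "(LEAST k. Pr k) = i"
    have "Pr i" using LeastI[of Pr, OF ex] m by simp
    then have 1: "u < Dc p (Suc i)" using Pr_iff i unfolding L_def by blast
    have 2: "Dc p i \<le> u"
    proof (cases i)
      case 0 then show ?thesis using u by (simp add: Dc_def)
    next
      case (Suc j)
      have "\<not> Pr j" using not_less_Least[of j Pr] m Suc by simp
      then show ?thesis using Pr_iff[of j] Suc i unfolding L_def by simp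
    qed
    show "Dc p i \<le> u \<and> u < Dc p (Suc i)" using 1 2 by simp
  next
    assume a: "Dc p i \<le> u \<and> u < Dc p (Suc i)"
    show "(LEAST k. Pr k) = i"
    proof (rule Least_equality)
      show "Pr i" using Pr_iff i a unfolding L_def by blast
      fix y assume "Pr y"
      show "i \<le> y"
      proof (rule ccontr)
        assume "\<not> i \<le> y"
        then have "y < L" "Suc y \<le> i" using i unfolding L_def by auto
        then have "u < Dc p (Suc y)" "Dc p (Suc y) \<le> Dc p i" using Pr_iff \<open>Pr y\<close> Dc_mono[OF nn] by auto
        then show False using a by simp
      qed
    qed
  qed
  finally show ?thesis .
qed

lemma stoch_delta:
  fixes p :: "'v::finite \<Rightarrow> real"
  assumes nn: "\<And>v. p v \<ge> 0" and s1: "(\<Sum>v\<in>UNIV. p v) = 1" and pe: "p e = 1"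
  shows "w \<noteq> e \<Longrightarrow> p w = 0"
proof -
  have "(\<Sum>v\<in>UNIV. p v) = p e + (\<Sum>v\<in>UNIV - {e}. p v)"
    by (simp add: sum.remove)
  then have "(\<Sum>v\<in>UNIV - {e}. p v) = 0" using s1 pe by simp
  then have "\<forall>v\<in>UNIV - {e}. p v = 0" using nn by (subst (asm) sum_nonneg_eq_0_iff) auto
  then show "w \<noteq> e \<Longrightarrow> p w = 0" by auto
qed

lemma choose_delta:
  fixes p :: "'v::finite \<Rightarrow> real"
  assumes nn: "\<And>v. p v \<ge> 0" and s1: "(\<Sum>v\<in>UNIV. p v) = 1" and pe: "p e = 1"
    and u: "0 \<le> u" "u < 1"
  shows "choose_state p u = e"
proof -
  obtain i where i: "i < length (enum_states::'v list)" "enum_states ! i = e"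
    using enum_ok[where 'v='v] by (metis UNIV_I in_set_conv_nth)
  have z: "p w = 0" if "w \<noteq> e" for w using stoch_delta[OF nn s1 pe that] .
  have "Dc p i = 0" unfolding Dc_def
  proof (rule sum.neutral, rule ballI)
    fix j assume "j \<in> {..<i}"
    then have "enum_states ! j \<noteq> (enum_states ! i :: 'v)"
      using nth_eq_iff_index_eq[of "enum_states::'v list" j i] enum_ok[where 'v='v] i by auto
    then show "p (enum_states ! j) = 0" using z i by auto
  qed
  then have "Dc p i \<le> u \<and> u < Dc p (Suc i)" using Dc_Suc[of p i] i pe u by simp
  then show ?thesis using choose_char[OF nn s1 u i(1)] i by simp
qed

lemma choose_meas[measurable]:
  fixes p :: "'a \<Rightarrow> 'v::finite \<Rightarrow> real"
  assumes [measurable]: "\<And>v. (\<lambda>\<omega>. p \<omega> v) \<in> borel_measurable N" and [measurable]: "U \<in> borel_measurable N"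
  shows "(\<lambda>\<omega>. choose_state (p \<omega>) (U \<omega>)) \<in> measurable N (count_space UNIV)"
proof -
  have "(\<lambda>\<omega>. LEAST k. Suc k = length (enum_states :: 'v list) \<or> U \<omega> < Dc (p \<omega>) (Suc k)) \<in> measurable N (count_space UNIV)"
    unfolding Dc_def by measurable
  then have "(\<lambda>\<omega>. (enum_states :: 'v list) ! (LEAST k. Suc k = length (enum_states :: 'v list) \<or> U \<omega> < Dc (p \<omega>) (Suc k))) \<in> measurable N (count_space UNIV)"
    by (rule measurable_compose) simp
  then show ?thesis unfolding choose_eq_Least .
qed

lemma choose_meas_u[measurable]: "(\<lambda>u. choose_state p u) \<in> measurable borel (count_space UNIV)"
  by (rule choose_meas) auto

lemma emeasure_Unif: "A \<in> sets borel \<Longrightarrow> emeasure Unif A = emeasure lborel ({0..1} \<inter> A)"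
  unfolding Unif_def by (subst emeasure_uniform_measure) (auto simp: divide_ennreal_def)

lemma Unif_choose:
  fixes p :: "'v::finite \<Rightarrow> real"
  assumes nn: "\<And>v. p v \<ge> 0" and s1: "(\<Sum>v\<in>UNIV. p v) = 1"
  shows "emeasure Unif {u. choose_state p u = v} = ennreal (p v)"
proof -
  obtain i where i: "i < length (enum_states::'v list)" "enum_states ! i = v"
    using enum_ok[where 'v='v] by (metis UNIV_I in_set_conv_nth)
  define S where "S = {u. choose_state p u = v}"
  have Sm: "S \<in> sets borel" unfolding S_def by measurable
  have DS: "Dc p (Suc i) \<le> 1"
    using Dc_mono[of p, OF nn, of "Suc i" "length (enum_states::'v list)"] i Dc_L[of p] s1 by simp
  have D0: "0 \<le> Dc p i" by (rule Dc_nonneg[OF nn])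
  have Dle: "Dc p i \<le> Dc p (Suc i)" by (rule Dc_mono[OF nn]) simp
  have sub1: "{Dc p i..<Dc p (Suc i)} \<subseteq> {0..1} \<inter> S"
  proof
    fix u assume "u \<in> {Dc p i..<Dc p (Suc i)}"
    then have "0 \<le> u" "u < 1" "Dc p i \<le> u \<and> u < Dc p (Suc i)" using D0 DS by auto
    then show "u \<in> {0..1} \<inter> S" using choose_char[OF nn s1 _ _ i(1)] i unfolding S_def by auto
  qed
  have sub2: "{0..1} \<inter> S \<subseteq> {Dc p i..<Dc p (Suc i)} \<union> {1}"
  proof
    fix u assume u: "u \<in> {0..1} \<inter> S"
    show "u \<in> {Dc p i..<Dc p (Suc i)} \<union> {1}"
    proof (cases "u = 1")
      case False
      then have "0 \<le> u" "u < 1" using u by auto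
      then show ?thesis using choose_char[OF nn s1 _ _ i(1)] i u unfolding S_def by auto
    qed simp
  qed
  have "emeasure lborel {Dc p i..<Dc p (Suc i)} \<le> emeasure lborel ({0..1} \<inter> S)"
    using sub1 Sm by (intro emeasure_mono) auto
  moreover have "emeasure lborel ({0..1} \<inter> S) \<le> emeasure lborel ({Dc p i..<Dc p (Suc i)} \<union> {1})"
    using sub2 by (intro emeasure_mono) auto
  moreover have "emeasure lborel ({Dc p i..<Dc p (Suc i)} \<union> {1}) \<le> emeasure lborel {Dc p i..<Dc p (Suc i)} + emeasure lborel {1::real}"
    by (rule emeasure_subadditive) auto
  moreover have "emeasure lborel {Dc p i..<Dc p (Suc i)} = ennreal (p v)"
    using Dle i Dc_Suc[of p i] by simp
  ultimately have "emeasure lborel ({0..1} \<inter> S) = ennreal (p v)" by (simp add: antisym)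
  then show ?thesis using emeasure_Unif[OF Sm] unfolding S_def by simp
qed

lemma choose_DIS:
  fixes p q :: "'v::finite \<Rightarrow> real"
  assumes "choose_state p u \<noteq> choose_state q u"
  shows "\<exists>i<length (enum_states::'v list). (u < Dc p (Suc i)) \<noteq> (u < Dc q (Suc i))"
proof (rule ccontr)
  define L where "L = length (enum_states::'v list)"
  assume "\<not> ?thesis"
  then have eq: "\<And>i. i < L \<Longrightarrow> (u < Dc p (Suc i)) = (u < Dc q (Suc i))" unfolding L_def by auto
  define Pp where "Pp k \<longleftrightarrow> Suc k = L \<or> u < Dc p (Suc k)" for k
  define Pq where "Pq k \<longleftrightarrow> Suc k = L \<or> u < Dc q (Suc k)" for k
  have L0: "L > 0" unfolding L_def by (rule len_enum_pos)
  have ex: "Pp (L - 1)" unfolding Pp_def using L0 by simp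
  define m where "m = (LEAST k. Pp k)"
  have mL: "m < L" using Least_le[of Pp "L - 1", OF ex] L0 unfolding m_def by linarith
  have "Pp m" using LeastI[of Pp, OF ex] unfolding m_def .
  have Pqm: "Pq m" using \<open>Pp m\<close> eq[OF mL] unfolding Pp_def Pq_def by auto
  have "(LEAST k. Pq k) = m"
  proof (rule Least_equality)
    show "Pq m" by (rule Pqm)
    fix y assume "Pq y"
    show "m \<le> y"
    proof (rule ccontr)
      assume "\<not> m \<le> y"
      then have "y < m" by simp
      then have "y < L" using mL by simp
      then have "Pp y" using \<open>Pq y\<close> eq unfolding Pp_def Pq_def by auto
      then show False using not_less_Least[of y Pp] \<open>y < m\<close> unfolding m_def by simp
    qed
  qed
  then have "choose_state p u = choose_state q u"
    unfolding choose_eq_Least using m_def unfolding Pp_def Pq_def L_def by simp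
  then show False using assms by simp
qed

lemma Dc_diff:
  fixes p q :: "'v::finite \<Rightarrow> real"
  assumes that: "i < length (enum_states::'v list)"
  shows "\<bar>Dc p (Suc i) - Dc q (Suc i)\<bar> \<le> (\<Sum>v\<in>UNIV. \<bar>p v - q v\<bar>)"
proof -
  have "\<bar>Dc p (Suc i) - Dc q (Suc i)\<bar> = \<bar>\<Sum>j<Suc i. p (enum_states ! j) - q (enum_states ! j)\<bar>"
    unfolding Dc_def by (simp add: sum_subtractf)
  also have "\<dots> \<le> (\<Sum>j<Suc i. \<bar>p (enum_states ! j) - q (enum_states ! j)\<bar>)" by (rule sum_abs)
  also have "\<dots> \<le> (\<Sum>j<length (enum_states::'v list). \<bar>p (enum_states ! j) - q (enum_states ! j)\<bar>)"
    by (rule sum_mono2) (use that in auto)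
  also have "\<dots> = (\<Sum>v\<in>UNIV. \<bar>p v - q v\<bar>)" by (rule sum_enum)
  finally show ?thesis .
qed

lemma Unif_DIS:
  fixes p q :: "'v::finite \<Rightarrow> real"
  shows "emeasure Unif {u. choose_state p u \<noteq> choose_state q u}
     \<le> ennreal (real (card (UNIV::'v set)) * (\<Sum>v\<in>UNIV. \<bar>p v - q v\<bar>))"
proof -
  define L where "L = length (enum_states::'v list)"
  define A where "A i = {min (Dc p (Suc i)) (Dc q (Suc i))..<max (Dc p (Suc i)) (Dc q (Suc i))}" for i
  have sub: "{u. choose_state p u \<noteq> choose_state q u} \<subseteq> (\<Union>i\<in>{..<L}. A i)"
  proof
    fix u assume "u \<in> {u. choose_state p u \<noteq> choose_state q u}"
    then obtain i where "i < L" "(u < Dc p (Suc i)) \<noteq> (u < Dc q (Suc i))"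
      using choose_DIS[of p u q] unfolding L_def by auto
    then show "u \<in> (\<Union>i\<in>{..<L}. A i)" unfolding A_def by (intro UN_I[of i]) (auto simp: min_def max_def)
  qed
  have "emeasure Unif {u. choose_state p u \<noteq> choose_state q u} \<le> emeasure Unif (\<Union>i\<in>{..<L}. A i)"
    using sub unfolding A_def by (intro emeasure_mono) auto
  also have "\<dots> \<le> (\<Sum>i<L. emeasure Unif (A i))"
    by (rule emeasure_subadditive_finite) (auto simp: A_def)
  also have "\<dots> \<le> (\<Sum>i<L. ennreal (\<Sum>v\<in>UNIV. \<bar>p v - q v\<bar>))"
  proof (rule sum_mono)
    fix i assume i: "i \<in> {..<L}"
    have "emeasure Unif (A i) = emeasure lborel ({0..1} \<inter> A i)"
      by (rule emeasure_Unif) (simp add: A_def)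
    also have "\<dots> \<le> emeasure lborel (A i)" by (rule emeasure_mono) (auto simp: A_def)
    also have "\<dots> = ennreal \<bar>Dc p (Suc i) - Dc q (Suc i)\<bar>"
      unfolding A_def by (simp add: max_def min_def)
    also have "\<dots> \<le> ennreal (\<Sum>v\<in>UNIV. \<bar>p v - q v\<bar>)"
      using Dc_diff[of i p q] i unfolding L_def by (intro ennreal_leI) auto
    finally show "emeasure Unif (A i) \<le> ennreal (\<Sum>v\<in>UNIV. \<bar>p v - q v\<bar>)" .
  qed
  also have "\<dots> = ennreal (real L * (\<Sum>v\<in>UNIV. \<bar>p v - q v\<bar>))"
    by (simp add: ennreal_of_nat_eq_real_of_nat ennreal_mult)
  finally show ?thesis unfolding L_def len_enum .
qed

lemma INT_choose:
  fixes p :: "'v::finite \<Rightarrow> real" and g :: "'v \<Rightarrow> ennreal"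
  assumes lam: "lam > 0" and nn: "\<And>v. p v \<ge> 0" and s1: "(\<Sum>v\<in>UNIV. p v) = 1"
  shows "(\<integral>\<^sup>+ s. g (choose_state p (snd s)) \<partial>M0 lam) = (\<Sum>v\<in>UNIV. ennreal (p v) * g v)"
proof -
  have "(\<integral>\<^sup>+ s. g (choose_state p (snd s)) \<partial>M0 lam) = (\<integral>\<^sup>+ u. g (choose_state p u) \<partial>Unif)"
    by (rule M0_snd[OF lam]) measurable
  also have "\<dots> = (\<integral>\<^sup>+ u. (\<Sum>v\<in>UNIV. g v * indicator {u. choose_state p u = v} u) \<partial>Unif)"
  proof (rule nn_integral_cong)
    fix u
    have "(\<Sum>v\<in>UNIV. g v * indicator {u. choose_state p u = v} u) = (\<Sum>v\<in>{choose_state p u}. g v * indicator {u. choose_state p u = v} u)"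
      by (rule sum.mono_neutral_right) auto
    then show "g (choose_state p u) = (\<Sum>v\<in>UNIV. g v * indicator {u. choose_state p u = v} u)" by simp
  qed
  also have "\<dots> = (\<Sum>v\<in>UNIV. \<integral>\<^sup>+ u. g v * indicator {u. choose_state p u = v} u \<partial>Unif)"
    by (rule nn_integral_sum) measurable
  also have "\<dots> = (\<Sum>v\<in>UNIV. g v * emeasure Unif {u. choose_state p u = v})"
    by (intro sum.cong refl nn_integral_cmult_indicator) measurable
  also have "\<dots> = (\<Sum>v\<in>UNIV. ennreal (p v) * g v)"
    using Unif_choose[OF nn s1] by (simp add: mult.commute)
  finally show ?thesis .
qed


lemma mpow_add: "mpow p (m + n) v w = (\<Sum>u\<in>UNIV. mpow p m v u * mpow p n u w)"
proof (induction n arbitrary: w)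
  case 0 then show ?case by (simp add: if_distrib cong: if_cong)
next
  case (Suc n)
  have "mpow p (m + Suc n) v w = (\<Sum>u\<in>UNIV. mpow p (m + n) v u * p u w)" by simp
  also have "\<dots> = (\<Sum>u\<in>UNIV. (\<Sum>u'\<in>UNIV. mpow p m v u' * mpow p n u' u) * p u w)"
    using Suc by simp
  also have "\<dots> = (\<Sum>u'\<in>UNIV. mpow p m v u' * (\<Sum>u\<in>UNIV. mpow p n u' u * p u w))"
    by (simp add: sum_distrib_left sum_distrib_right mult.assoc) (rule sum.swap)
  also have "\<dots> = (\<Sum>u'\<in>UNIV. mpow p m v u' * mpow p (Suc n) u' w)" by simp
  finally show ?case .
qed

lemma delta_sum: fixes v :: "'v::finite" shows "(\<Sum>u\<in>UNIV. (if v = u then 1 else 0) * f u) = (f v :: real)"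
proof -
  have "(\<Sum>u\<in>UNIV. (if v = u then 1 else 0) * f u) = (\<Sum>u\<in>UNIV. if v = u then f u else 0)"
    by (rule sum.cong) auto
  also have "\<dots> = f v" by (simp add: sum.delta')
  finally show ?thesis .
qed

lemma mpow_1: "mpow p (Suc 0) v w = p v w"
  by (simp add: delta_sum)

lemma mpow_first: "mpow p (Suc n) v w = (\<Sum>u\<in>UNIV. p v u * mpow p n u w)"
  using mpow_add[of p "Suc 0" n v w] by (simp only: add_Suc add_0 mpow_1)

definition Gt :: "('v::finite \<Rightarrow> 'v \<Rightarrow> real) \<Rightarrow> 'v set \<Rightarrow> nat \<Rightarrow> 'v \<Rightarrow> real" where
  "Gt p E n v = (\<Sum>w\<in>UNIV - E. mpow p n v w)"

lemma Gt_step: "Gt p E (j + n) v = (\<Sum>u\<in>UNIV. mpow p j v u * Gt p E n u)"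
  unfolding Gt_def mpow_add by (simp add: sum_distrib_left) (rule sum.swap)

lemma sum_split_E: fixes f :: "'v::finite \<Rightarrow> 'a::comm_monoid_add"
  shows "(\<Sum>w\<in>UNIV. f w) = (\<Sum>w\<in>E. f w) + (\<Sum>w\<in>UNIV - E. f w)"
  using sum.subset_diff[of E UNIV f] by (simp add: add.commute)

context
  fixes p :: "'v::finite \<Rightarrow> 'v \<Rightarrow> real" and E :: "'v set"
  assumes nn: "\<And>v w. p v w \<ge> 0" and s1: "\<And>v. (\<Sum>w\<in>UNIV. p v w) = 1"
    and ab: "\<And>e. e \<in> E \<Longrightarrow> p e e = 1"
begin

lemma mpow_nonneg: "mpow p n v w \<ge> 0"
  by (induction n arbitrary: w) (auto intro!: sum_nonneg mult_nonneg_nonneg nn)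

lemma mpow_sum1: "(\<Sum>w\<in>UNIV. mpow p n v w) = 1"
proof (induction n)
  case 0 then show ?case by simp
next
  case (Suc n)
  have "(\<Sum>w\<in>UNIV. mpow p (Suc n) v w) = (\<Sum>u\<in>UNIV. mpow p n v u * (\<Sum>w\<in>UNIV. p u w))"
    by (simp add: sum_distrib_left) (rule sum.swap)
  also have "\<dots> = 1" using Suc s1 by simp
  finally show ?case .
qed

lemma mpow_le1: "mpow p n v w \<le> 1"
proof -
  have "mpow p n v w \<le> (\<Sum>w\<in>UNIV. mpow p n v w)"
    by (rule member_le_sum) (auto intro: mpow_nonneg)
  then show ?thesis using mpow_sum1 by simp
qed

lemma p_delta: "e \<in> E \<Longrightarrow> w \<noteq> e \<Longrightarrow> p e w = 0"
  using stoch_delta[of "p e" e w] nn s1 ab by auto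

lemma mpow_absorb: "e \<in> E \<Longrightarrow> mpow p n e w = (if e = w then 1 else 0)"
proof (induction n arbitrary: w)
  case 0 then show ?case by simp
next
  case (Suc n)
  have "mpow p (Suc n) e w = (\<Sum>u\<in>UNIV. (if e = u then 1 else 0) * p u w)" using Suc by simp
  also have "\<dots> = p e w" by (rule delta_sum)
  also have "\<dots> = (if e = w then 1 else 0)" using p_delta[OF Suc.prems] ab[OF Suc.prems] by auto
  finally show ?case .
qed

lemma Gt_nonneg: "Gt p E n v \<ge> 0"
  unfolding Gt_def by (intro sum_nonneg mpow_nonneg)

lemma Gt_le1: "Gt p E n v \<le> 1"
proof -
  have "Gt p E n v \<le> (\<Sum>w\<in>UNIV. mpow p n v w)"
    unfolding Gt_def by (rule sum_mono2) (auto intro: mpow_nonneg)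
  then show ?thesis using mpow_sum1 by simp
qed

lemma Gt_absorb: "u \<in> E \<Longrightarrow> Gt p E n u = 0"
  unfolding Gt_def using mpow_absorb by (intro sum.neutral) auto

lemma Gt_decay:
  assumes z: "\<And>v. Gt p E n0 v \<le> z"
  shows "Gt p E (j + n0) v \<le> z * Gt p E j v"
proof -
  have "Gt p E (j + n0) v = (\<Sum>u\<in>UNIV. mpow p j v u * Gt p E n0 u)" by (rule Gt_step)
  also have "\<dots> = (\<Sum>u\<in>UNIV - E. mpow p j v u * Gt p E n0 u)"
    by (rule sum.mono_neutral_right) (auto simp: Gt_absorb)
  also have "\<dots> \<le> (\<Sum>u\<in>UNIV - E. mpow p j v u * z)"
    by (intro sum_mono mult_left_mono z mpow_nonneg)
  also have "\<dots> = z * Gt p E j v" unfolding Gt_def by (simp add: sum_distrib_left mult.commute)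
  finally show ?thesis .
qed

lemma Gt_pow:
  assumes z: "\<And>v. Gt p E n0 v \<le> z" and z0: "0 \<le> z"
  shows "Gt p E (q * n0 + r) v \<le> z ^ q"
proof (induction q arbitrary: v)
  case 0 then show ?case using Gt_le1 by simp
next
  case (Suc q)
  have "Gt p E (Suc q * n0 + r) v = Gt p E ((q * n0 + r) + n0) v" by (simp add: algebra_simps)
  also have "\<dots> \<le> z * Gt p E (q * n0 + r) v" by (rule Gt_decay[OF z])
  also have "\<dots> \<le> z * z ^ q" by (intro mult_left_mono Suc z0)
  finally show ?case by simp
qed

lemma Gt_div:
  assumes z: "\<And>v. Gt p E n0 v \<le> z" and z0: "0 \<le> z"
  shows "Gt p E k v \<le> z ^ (k div n0)"
  using Gt_pow[OF z z0, of "k div n0" "k mod n0" v] by simp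

lemma Gt_exp:
  assumes z: "\<And>v. Gt p E n0 v \<le> z" and z0: "0 < z" "z < 1" and n0: "n0 \<ge> 1"
  shows "Gt p E k v \<le> (1/z) * exp (real k * ln z / n0)"
proof -
  have "Gt p E k v \<le> z ^ (k div n0)" using Gt_div[OF z] z0 by simp
  also have "\<dots> = exp (real (k div n0) * ln z)" using z0 by (simp add: exp_of_nat_mult)
  also have "\<dots> \<le> exp ((real k / n0 - 1) * ln z)"
  proof -
    have "k mod n0 < n0" using n0 by simp
    then have "k < k div n0 * n0 + n0" using div_mult_mod_eq[of k n0] by linarith
    then have "k < (k div n0 + 1) * n0" by (simp add: algebra_simps)
    then have "real k < (real (k div n0) + 1) * n0" by (metis of_nat_add of_nat_1 of_nat_less_iff of_nat_mult)
    then have "real k / n0 - 1 < real (k div n0)" using n0 by (simp add: field_simps)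
    moreover have "ln z < 0" using z0 by simp
    ultimately show ?thesis by (intro exp_mono mult_right_mono_neg) auto
  qed
  also have "\<dots> = (1/z) * exp (real k * ln z / n0)"
    using z0 by (simp add: algebra_simps exp_diff exp_ln)
  finally show ?thesis .
qed

lemma absorb_lim:
  assumes e: "e \<in> E"
  shows "(\<lambda>n. mpow p n v e) \<longlonglongrightarrow> absorb_prob p v e" and "mpow p n v e \<le> absorb_prob p v e"
proof -
  have inc: "incseq (\<lambda>n. mpow p n v e)"
  proof (rule incseq_SucI)
    fix n
    have "mpow p n v e * p e e \<le> (\<Sum>u\<in>UNIV. mpow p n v u * p u e)"
      by (rule member_le_sum) (auto intro: mult_nonneg_nonneg mpow_nonneg nn)
    then show "mpow p n v e \<le> mpow p (Suc n) v e" using ab[OF e] by simp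
  qed
  obtain L where L: "(\<lambda>n. mpow p n v e) \<longlonglongrightarrow> L" "\<And>i. mpow p i v e \<le> L"
    using incseq_convergent[OF inc, of 1] mpow_le1 by blast
  have "absorb_prob p v e = L" unfolding absorb_prob_def using L(1) by (rule limI)
  then show "(\<lambda>n. mpow p n v e) \<longlonglongrightarrow> absorb_prob p v e" "mpow p n v e \<le> absorb_prob p v e"
    using L by auto
qed

lemma Gt_lim:
  assumes z: "\<And>v. Gt p E n0 v \<le> z" and z0: "0 < z" "z < 1" and n0: "n0 \<ge> 1"
  shows "(\<lambda>n. Gt p E n v) \<longlonglongrightarrow> 0"
proof (rule tendsto_sandwich[of "\<lambda>_. 0" _ _ "\<lambda>n. (1/z) * exp (ln z / n0) ^ n"])
  show "\<forall>\<^sub>F n in sequentially. 0 \<le> Gt p E n v" by (simp add: Gt_nonneg)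
  show "\<forall>\<^sub>F n in sequentially. Gt p E n v \<le> 1 / z * exp (ln z / real n0) ^ n"
  proof (intro always_eventually allI)
    fix n
    have "exp (real n * ln z / n0) = exp (ln z / n0) ^ n" by (simp add: exp_of_nat_mult[symmetric] times_divide_eq_right)
    then show "Gt p E n v \<le> 1 / z * exp (ln z / real n0) ^ n" using Gt_exp[OF z z0 n0, of n v] by simp
  qed
  have "exp (ln z / n0) < 1" using z0 n0 by (simp add: divide_neg_pos)
  then have "(\<lambda>n. exp (ln z / n0) ^ n) \<longlonglongrightarrow> 0" by (intro LIMSEQ_power_zero) simp
  then show "(\<lambda>n. 1 / z * exp (ln z / real n0) ^ n) \<longlonglongrightarrow> 0"
    using tendsto_mult[OF tendsto_const, of _ 0 _ "1/z"] by simp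
qed simp

lemma mpow_split: "(\<Sum>e\<in>E. mpow p n v e) = 1 - Gt p E n v"
proof -
  have "(\<Sum>w\<in>UNIV. mpow p n v w) = (\<Sum>e\<in>E. mpow p n v e) + (\<Sum>w\<in>UNIV - E. mpow p n v w)"
    by (rule sum_split_E)
  then show ?thesis using mpow_sum1 unfolding Gt_def by simp
qed

lemma absorb_sum:
  assumes z: "\<And>v. Gt p E n0 v \<le> z" and z0: "0 < z" "z < 1" and n0: "n0 \<ge> 1"
  shows "(\<Sum>e\<in>E. absorb_prob p v e) = 1"
proof -
  have "(\<lambda>n. \<Sum>e\<in>E. mpow p n v e) \<longlonglongrightarrow> (\<Sum>e\<in>E. absorb_prob p v e)"
    by (intro tendsto_sum absorb_lim) auto
  moreover have "(\<lambda>n. \<Sum>e\<in>E. mpow p n v e) \<longlonglongrightarrow> 1 - 0"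
    unfolding mpow_split by (intro tendsto_diff tendsto_const Gt_lim[OF z z0 n0])
  ultimately show ?thesis using LIMSEQ_unique by fastforce
qed

lemma tv_matrix:
  assumes z: "\<And>v. Gt p E n0 v \<le> z" and z0: "0 < z" "z < 1" and n0: "n0 \<ge> 1"
  shows "(\<Sum>w\<in>UNIV. \<bar>mpow p m v w - (if w \<in> E then absorb_prob p v w else 0)\<bar>) = 2 * Gt p E m v"
proof -
  have "(\<Sum>w\<in>UNIV. \<bar>mpow p m v w - (if w \<in> E then absorb_prob p v w else 0)\<bar>)
     = (\<Sum>w\<in>E. \<bar>mpow p m v w - (if w \<in> E then absorb_prob p v w else 0)\<bar>)
       + (\<Sum>w\<in>UNIV - E. \<bar>mpow p m v w - (if w \<in> E then absorb_prob p v w else 0)\<bar>)"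
    by (rule sum_split_E)
  also have "(\<Sum>w\<in>E. \<bar>mpow p m v w - (if w \<in> E then absorb_prob p v w else 0)\<bar>) = (\<Sum>w\<in>E. absorb_prob p v w - mpow p m v w)"
    using absorb_lim(2) by (intro sum.cong refl) auto
  also have "\<dots> = 1 - (1 - Gt p E m v)"
    using absorb_sum[OF z z0 n0] mpow_split by (simp add: sum_subtractf)
  also have "(\<Sum>w\<in>UNIV - E. \<bar>mpow p m v w - (if w \<in> E then absorb_prob p v w else 0)\<bar>) = Gt p E m v"
    unfolding Gt_def using mpow_nonneg by (intro sum.cong refl) auto
  finally show ?thesis by simp
qed

end


lemma space_noise[simp]: "space (noise_space lam) = UNIV"
  unfolding noise_eq by (simp add: space_PiM PiE_UNIV_domain)

lemma l1norm_nonneg: "l1norm x \<ge> 0"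
  unfolding l1norm_def by (simp add: sum_nonneg)

lemma l1norm_le: "l1norm (x::real^'n) \<le> real CARD('n) * norm x"
proof -
  have "l1norm x \<le> (\<Sum>i\<in>(UNIV::'n set). norm x)" unfolding l1norm_def by (intro sum_mono component_le_norm_cart)
  then show ?thesis by simp
qed

lemma l1norm_tri: "l1norm (x + y) \<le> l1norm x + l1norm y"
  unfolding l1norm_def by (simp add: sum.distrib[symmetric] sum_mono abs_triangle_ineq)

fun Wc :: "('v::finite \<Rightarrow> 'v \<Rightarrow> real) \<Rightarrow> 'v \<Rightarrow> (nat \<Rightarrow> real \<times> real) \<Rightarrow> nat \<Rightarrow> 'v" where
  "Wc p s \<omega> 0 = s"
| "Wc p s \<omega> (Suc k) = choose_state (p (Wc p s \<omega> k)) (snd (\<omega> k))"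

lemma Wc_shift: "Wc p s (case_nat s0 \<omega>) (Suc k) = Wc p (choose_state (p s) (snd s0)) \<omega> k"
  by (induction k) auto

lemma Wc_meas[measurable]: "(\<lambda>\<omega>. Wc p s \<omega> k) \<in> measurable (noise_space lam) (count_space UNIV)"
proof (induction k)
  case 0 then show ?case by simp
next
  case (Suc k)
  have "(\<lambda>\<omega>. (\<lambda>w \<omega>. choose_state (p w) (snd (\<omega> k))) (Wc p s \<omega> k) \<omega>) \<in> measurable (noise_space lam) (count_space UNIV)"
    by (rule measurable_compose_countable[OF _ Suc]) measurable
  then show ?case by simp
qed

lemma rt_shift: "ring_time (case_nat s0 \<omega>) (Suc k) = fst s0 + ring_time \<omega> k"
  unfolding ring_time_def sum.lessThan_Suc_shift by simp

lemma rt_0[simp]: "ring_time \<omega> 0 = 0"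
  unfolding ring_time_def by simp

lemma rt_Suc: "ring_time \<omega> (Suc k) = ring_time \<omega> k + fst (\<omega> k)"
  unfolding ring_time_def by simp

lemma rt_meas[measurable]: "(\<lambda>\<omega>. ring_time \<omega> k) \<in> borel_measurable (noise_space lam)"
  unfolding ring_time_def by measurable

lemma rt_mono: "(\<And>j. 0 \<le> fst (\<omega> j)) \<Longrightarrow> j \<le> k \<Longrightarrow> ring_time \<omega> j \<le> ring_time \<omega> k"
  unfolding ring_time_def by (rule sum_mono2) auto

lemma js_shift: "jump_state a P (case_nat s0 \<omega>) y v (Suc k) =
  jump_state a P \<omega> (flow a v (fst s0) y) (choose_state (P (flow a v (fst s0) y) v) (snd s0)) k"
  by (induction k) (auto simp: Let_def split: prod.split)

lemma js_fst: "fst (jump_state a P \<omega> y v (Suc k)) = flow a (snd (jump_state a P \<omega> y v k)) (fst (\<omega> k)) (fst (jump_state a P \<omega> y v k))"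
  by (simp add: Let_def split: prod.split)
lemma js_snd: "snd (jump_state a P \<omega> y v (Suc k)) = choose_state (P (fst (jump_state a P \<omega> y v (Suc k))) (snd (jump_state a P \<omega> y v k))) (snd (\<omega> k))"
  by (simp add: Let_def split: prod.split)

locale setting =
  fixes a :: "real^'n \<Rightarrow> 'v::finite \<Rightarrow> real^'n" and P :: "real^'n \<Rightarrow> 'v \<Rightarrow> 'v \<Rightarrow> real" and E :: "'v set"
    and Ma L K0 :: real
  assumes a_cont: "\<And>v. continuous_on UNIV (\<lambda>x. a x v)"
    and a_bnd: "\<And>x v. norm (a x v) \<le> Ma"
    and a_lip: "\<And>x y v. norm (a x v - a y v) \<le> L * norm (x - y)" and L_pos: "L > 0"
    and P_nn: "\<And>x v w. P x v w \<ge> 0" and P_s1: "\<And>x v. (\<Sum>w\<in>UNIV. P x v w) = 1"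
    and P_ab: "\<And>x e. e \<in> E \<Longrightarrow> P x e e = 1"
    and K0_pos: "K0 > 0" and P_lip: "\<And>x x' v. (\<Sum>w\<in>UNIV. \<bar>P x v w - P x' v w\<bar>) \<le> K0 * l1norm (x - x')"
begin

lemma Ma_nonneg: "Ma \<ge> 0" using a_bnd[of 0 undefined] norm_ge_zero order_trans by blast

lemma flow_ex1: "\<exists>!y. y 0 = x \<and> (\<forall>r. (y has_vector_derivative a (y r) w) (at r))"
  by (rule ode_ex1[of "\<lambda>y. a y w" Ma L]) (use a_cont a_bnd a_lip L_pos in auto)

lemma flow_eq: "(\<lambda>s. flow a w s x) = (THE y. y 0 = x \<and> (\<forall>r. (y has_vector_derivative a (y r) w) (at r)))"
  unfolding flow_def by simp

lemma flow_THE: "(THE y. y 0 = x \<and> (\<forall>r. (y has_vector_derivative a (y r) w) (at r))) 0 = x \<and>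
   (\<forall>r. ((THE y. y 0 = x \<and> (\<forall>r. (y has_vector_derivative a (y r) w) (at r))) has_vector_derivative
        a ((THE y. y 0 = x \<and> (\<forall>r. (y has_vector_derivative a (y r) w) (at r))) r) w) (at r))"
  by (rule theI'[OF flow_ex1])

lemma flow_0: "flow a w 0 x = x"
  using flow_THE[of x w] unfolding flow_def by simp

lemma flow_deriv: "((\<lambda>s. flow a w s x) has_vector_derivative a (flow a w r x) w) (at r)"
  using flow_THE[of x w] unfolding flow_def by simp

lemma flow_tlip: "norm (flow a w r x - flow a w s x) \<le> Ma * \<bar>r - s\<bar>"
proof -
  have *: "norm (flow a w b x - flow a w c x) \<le> Ma * b - Ma * c" if "c \<le> b" for b c
    by (rule cmp_bound[where D'="\<lambda>s. a (flow a w s x) w" and \<phi>'="\<lambda>_. Ma"])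
       (use that in \<open>auto intro!: has_vector_derivative_at_within flow_deriv lin_deriv a_bnd\<close>)
  show ?thesis
  proof (cases "s \<le> r")
    case True
    then have e: "Ma * \<bar>r - s\<bar> = Ma * r - Ma * s" by (simp add: algebra_simps)
    show ?thesis unfolding e by (rule *[OF True])
  next
    case False
    then have e: "Ma * \<bar>r - s\<bar> = Ma * s - Ma * r" by (simp add: algebra_simps)
    show ?thesis unfolding e norm_minus_commute[of "flow a w r x"] by (rule *) (use False in simp)
  qed
qed

lemma flow_disp: "norm (flow a w s x - x) \<le> Ma * \<bar>s\<bar>"
  using flow_tlip[of w s x 0] by (simp add: flow_0)

lemma flow_l1disp: "l1norm (flow a w s x - x) \<le> real CARD('n) * Ma * \<bar>s\<bar>"
  using l1norm_le[of "flow a w s x - x"] flow_disp[of w s x]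
  by (metis (no_types, opaque_lifting) mult.assoc mult_left_mono of_nat_0_le_iff order_trans)

lemma flow_stab: "\<bar>s\<bar> \<le> real k / (2*L) \<Longrightarrow> norm (flow a w s x - flow a w s x') \<le> 2^k * norm (x - x')"
  using sol_stab[of "\<lambda>y. a y w" L "\<lambda>s. flow a w s x" "\<lambda>s. flow a w s x'" s k] a_lip L_pos flow_deriv
  by (simp add: flow_0)

lemma flow_cont: "continuous_on UNIV (\<lambda>p. flow a w (fst p) (snd p))"
  unfolding continuous_on_iff
proof (intro ballI allI impI)
  fix p0 :: "real \<times> (real^'n)" and e :: real
  assume e: "e > 0"
  obtain s0 x0 where p0: "p0 = (s0, x0)" by fastforce
  obtain k :: nat where k: "(\<bar>s0\<bar> + 1) * (2*L) \<le> k" using real_arch_simple by blast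
  define d where "d = min 1 (e / (2 * (Ma + 1 + 2^k)))"
  have p2: "(0::real) < 2^k" by simp
  have "0 < Ma + 1" using Ma_nonneg by linarith
  then have "0 < Ma + 1 + 2^k" using p2 by (rule add_pos_pos)
  then have den: "2 * (Ma + 1 + 2^k) > 0" by simp
  have d: "d > 0" unfolding d_def using e den by simp
  show "\<exists>d>0. \<forall>p\<in>UNIV. dist p p0 < d \<longrightarrow> dist (flow a w (fst p) (snd p)) (flow a w (fst p0) (snd p0)) < e"
  proof (intro exI conjI ballI impI)
    show "d > 0" by (rule d)
    fix p :: "real \<times> (real^'n)" assume "dist p p0 < d"
    then have ds: "\<bar>fst p - s0\<bar> < d" and dx: "norm (snd p - x0) < d"
      using dist_fst_le[of p p0] dist_snd_le[of p p0] unfolding p0 by (auto simp: dist_norm dist_real_def)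
    have "d \<le> 1" unfolding d_def by simp
    then have "\<bar>fst p\<bar> \<le> \<bar>s0\<bar> + 1" using ds by linarith
    then have "\<bar>fst p\<bar> * (2*L) \<le> (\<bar>s0\<bar> + 1) * (2*L)" using L_pos by (intro mult_right_mono) auto
    then have "\<bar>fst p\<bar> * (2*L) \<le> real k" using k by linarith
    then have s: "\<bar>fst p\<bar> \<le> real k / (2*L)" using L_pos by (simp add: field_simps)
    have "dist (flow a w (fst p) (snd p)) (flow a w s0 x0)
       \<le> norm (flow a w (fst p) (snd p) - flow a w (fst p) x0) + norm (flow a w (fst p) x0 - flow a w s0 x0)"
      using norm_triangle_ineq[of "flow a w (fst p) (snd p) - flow a w (fst p) x0" "flow a w (fst p) x0 - flow a w s0 x0"]
      by (simp add: dist_norm)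
    also have "\<dots> \<le> 2^k * norm (snd p - x0) + Ma * \<bar>fst p - s0\<bar>"
      by (intro add_mono flow_stab[OF s] flow_tlip)
    also have "\<dots> \<le> 2^k * d + Ma * d"
      using ds dx Ma_nonneg by (intro add_mono mult_left_mono) auto
    also have "\<dots> \<le> (Ma + 1 + 2^k) * d" using d by (simp add: algebra_simps)
    also have "\<dots> \<le> (Ma + 1 + 2^k) * (e / (2 * (Ma + 1 + 2^k)))"
      using den unfolding d_def by (intro mult_left_mono) auto
    also have "\<dots> = e / 2"
    proof -
      have gen: "\<And>c::real. c > 0 \<Longrightarrow> c * (e / (2*c)) = e/2" by (simp add: field_simps)
      show ?thesis by (rule gen) (use den in simp)
    qed
    also have "\<dots> < e" using e by simp
    finally show "dist (flow a w (fst p) (snd p)) (flow a w (fst p0) (snd p0)) < e" unfolding p0 by simp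
  qed
qed

lemma flow_meas[measurable]:
  assumes [measurable]: "f \<in> borel_measurable M" "g \<in> borel_measurable M"
  shows "(\<lambda>\<omega>. flow a w (f \<omega>) (g \<omega>)) \<in> borel_measurable M"
  by (rule borel_measurable_continuous_Pair[OF assms flow_cont])

lemma P_cont: "continuous_on UNIV (\<lambda>y. P y v w)"
proof -
  have "(K0 * real CARD('n))-lipschitz_on UNIV (\<lambda>y. P y v w)"
  proof (rule lipschitz_onI)
    fix y y' :: "real^'n"
    have "\<bar>P y v w - P y' v w\<bar> \<le> (\<Sum>w\<in>UNIV. \<bar>P y v w - P y' v w\<bar>)"
      by (rule member_le_sum) auto
    also have "\<dots> \<le> K0 * l1norm (y - y')" by (rule P_lip)
    also have "\<dots> \<le> K0 * (real CARD('n) * norm (y - y'))"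
      using K0_pos l1norm_le by (intro mult_left_mono) auto
    finally show "dist (P y v w) (P y' v w) \<le> K0 * real CARD('n) * dist y y'"
      by (simp add: dist_norm dist_real_def mult.assoc)
  qed (use K0_pos in auto)
  then show ?thesis by (rule lipschitz_on_continuous_on)
qed

lemma P_meas[measurable]: "f \<in> borel_measurable M \<Longrightarrow> (\<lambda>\<omega>. P (f \<omega>) v w) \<in> borel_measurable M"
  using measurable_compose[OF _ borel_measurable_continuous_onI[OF P_cont]] by blast

lemma js_meas:
  "(\<lambda>\<omega>. fst (jump_state a P \<omega> y0 v0 k)) \<in> borel_measurable (noise_space lam) \<and>
   (\<lambda>\<omega>. snd (jump_state a P \<omega> y0 v0 k)) \<in> measurable (noise_space lam) (count_space UNIV)"
proof (induction k)
  case 0 then show ?case by simp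
next
  case (Suc k)
  note IH1[measurable] = Suc[THEN conjunct1] and IH2[measurable] = Suc[THEN conjunct2]
  have F: "(\<lambda>\<omega>. fst (jump_state a P \<omega> y0 v0 (Suc k))) \<in> borel_measurable (noise_space lam)"
  proof -
    have "(\<lambda>\<omega>. (\<lambda>w \<omega>. flow a w (fst (\<omega> k)) (fst (jump_state a P \<omega> y0 v0 k))) (snd (jump_state a P \<omega> y0 v0 k)) \<omega>)
       \<in> borel_measurable (noise_space lam)"
      by (rule measurable_compose_countable[OF _ IH2]) measurable
    then show ?thesis unfolding js_fst by simp
  qed
  note F[measurable]
  have S: "(\<lambda>\<omega>. snd (jump_state a P \<omega> y0 v0 (Suc k))) \<in> measurable (noise_space lam) (count_space UNIV)"
  proof -
    have "(\<lambda>\<omega>. (\<lambda>w \<omega>. choose_state (P (fst (jump_state a P \<omega> y0 v0 (Suc k))) w) (snd (\<omega> k))) (snd (jump_state a P \<omega> y0 v0 k)) \<omega>)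
       \<in> measurable (noise_space lam) (count_space UNIV)"
      by (rule measurable_compose_countable[OF _ IH2]) measurable
    then show ?thesis unfolding js_snd[of a P _ y0 v0 k] by simp
  qed
  show ?case using F S by simp
qed

lemma js_fst_meas[measurable]: "(\<lambda>\<omega>. fst (jump_state a P \<omega> y0 v0 k)) \<in> borel_measurable (noise_space lam)"
  using js_meas by blast
lemma js_snd_meas[measurable]: "(\<lambda>\<omega>. snd (jump_state a P \<omega> y0 v0 k)) \<in> measurable (noise_space lam) (count_space UNIV)"
  using js_meas by blast

lemma V_meas[measurable]: "(\<lambda>\<omega>. V_proc a P x v t \<omega>) \<in> measurable (noise_space lam) (count_space UNIV)"
proof -
  have N: "(\<lambda>\<omega>. LEAST k. t < ring_time \<omega> (Suc k)) \<in> measurable (noise_space lam) (count_space UNIV)"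
    by measurable
  have J: "(\<lambda>\<omega>. (\<lambda>k \<omega>. snd (jump_state a P \<omega> x v k)) (LEAST k. t < ring_time \<omega> (Suc k)) \<omega>) \<in> measurable (noise_space lam) (count_space UNIV)"
    by (rule measurable_compose_countable[OF _ N]) measurable
  have C: "{\<omega> \<in> space (noise_space lam). \<exists>k. t < ring_time \<omega> (Suc k)} \<in> sets (noise_space lam)"
    by measurable
  show ?thesis unfolding V_proc_def
    by (rule measurable_If[OF J measurable_const C]) simp
qed

end


lemma prob_noise: "lam > 0 \<Longrightarrow> prob_space (noise_space lam)"
proof -
  assume lam: "lam > 0"
  interpret prob_space "M0 lam" by (rule prob_M0[OF lam])
  interpret S: sequence_space "M0 lam" ..
  show ?thesis unfolding noise_eq by (rule S.P.prob_space_axioms)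
qed

lemma REC':
  assumes lam: "lam > 0" and A: "{\<omega>. Q \<omega>} \<in> sets (noise_space lam)"
  shows "emeasure (noise_space lam) {\<omega>. Q \<omega>} =
    (\<integral>\<^sup>+ s. emeasure (noise_space lam) {\<omega>. Q (case_nat s \<omega>)} \<partial>M0 lam)"
  using REC[OF lam A] by simp

lemma mpow_nonneg': "(\<And>v w. p v w \<ge> 0) \<Longrightarrow> mpow p n v w \<ge> 0"
  by (induction n arbitrary: w) (auto intro!: sum_nonneg mult_nonneg_nonneg)

lemma W_law:
  fixes p :: "'v::finite \<Rightarrow> 'v \<Rightarrow> real"
  assumes lam: "lam > 0" and nn: "\<And>v w. p v w \<ge> 0" and s1: "\<And>v. (\<Sum>w\<in>UNIV. p v w) = 1"
  shows "emeasure (noise_space lam) {\<omega>. Wc p s \<omega> k = w} = ennreal (mpow p k s w)"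
proof (induction k arbitrary: s)
  case 0
  interpret prob_space "noise_space lam" by (rule prob_noise[OF lam])
  show ?case using emeasure_space_1 by (cases "s = w") auto
next
  case (Suc k)
  have meas: "{\<omega>. Wc p s \<omega> (Suc k) = w} \<in> sets (noise_space lam)"
    using measurable_sets[OF Wc_meas[of p s "Suc k" lam], of "{w}"] by (simp add: vimage_def)
  have "emeasure (noise_space lam) {\<omega>. Wc p s \<omega> (Suc k) = w}
      = (\<integral>\<^sup>+ s0. emeasure (noise_space lam) {\<omega>. Wc p (choose_state (p s) (snd s0)) \<omega> k = w} \<partial>M0 lam)"
    by (subst REC'[OF lam meas]) (simp del: Wc.simps add: Wc_shift)
  also have "\<dots> = (\<integral>\<^sup>+ s0. ennreal (mpow p k (choose_state (p s) (snd s0)) w) \<partial>M0 lam)"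
    using Suc by simp
  also have "\<dots> = (\<Sum>u\<in>UNIV. ennreal (p s u) * ennreal (mpow p k u w))"
    by (rule INT_choose[OF lam nn s1])
  also have "\<dots> = (\<Sum>u\<in>UNIV. ennreal (p s u * mpow p k u w))"
    using nn mpow_nonneg'[of p, OF nn] by (simp add: ennreal_mult)
  also have "\<dots> = ennreal (\<Sum>u\<in>UNIV. p s u * mpow p k u w)"
    using nn mpow_nonneg'[of p, OF nn] by (intro sum_ennreal) simp
  also have "\<dots> = ennreal (mpow p (Suc k) s w)" by (simp only: mpow_first)
  finally show ?case .
qed

lemma rt_sets[measurable]:
  "{\<omega>. t < ring_time \<omega> m} \<in> sets (noise_space lam)" "{\<omega>. ring_time \<omega> m \<le> t} \<in> sets (noise_space lam)"
  using measurable_sets[OF rt_meas[of m lam], of "{t<..}"] measurable_sets[OF rt_meas[of m lam], of "{..t}"]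
  by (auto simp: vimage_def)

lemma TB1:
  assumes lam: "lam > 0"
  shows "emeasure (noise_space lam) {\<omega>. t < ring_time \<omega> m} \<le> ennreal (2^m * exp (- (lam * t / 2)))"
proof (induction m arbitrary: t)
  case 0
  interpret prob_space "noise_space lam" by (rule prob_noise[OF lam])
  show ?case
  proof (cases "t < 0")
    case True
    have "lam * t < 0" using True lam by (simp add: mult_pos_neg)
    then have "1 \<le> exp (- (lam * t / 2))" by simp
    then show ?thesis using True emeasure_space_1 by simp
  qed simp
next
  case (Suc m)
  have "emeasure (noise_space lam) {\<omega>. t < ring_time \<omega> (Suc m)}
      = (\<integral>\<^sup>+ s0. emeasure (noise_space lam) {\<omega>. t - fst s0 < ring_time \<omega> m} \<partial>M0 lam)"
    by (subst REC'[OF lam rt_sets(1)]) (simp add: rt_shift algebra_simps)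
  also have "\<dots> \<le> (\<integral>\<^sup>+ s0. ennreal (2^m * exp (- (lam * (t - fst s0) / 2))) \<partial>M0 lam)"
    by (intro nn_integral_mono Suc)
  also have "\<dots> = (\<integral>\<^sup>+ \<tau>. ennreal (2^m * exp (- (lam * (t - \<tau>) / 2))) \<partial>Expm lam)"
    by (rule M0_fst[OF lam]) measurable
  also have "\<dots> = (\<integral>\<^sup>+ \<tau>. ennreal (2^m * exp (- (lam * t / 2))) * ennreal (exp ((lam/2) * \<tau>)) \<partial>Expm lam)"
  proof (rule nn_integral_cong)
    fix \<tau> :: real
    have "exp (- (lam * (t - \<tau>) / 2)) = exp (- (lam * t / 2) + (lam/2) * \<tau>)"
      by (rule arg_cong[where f=exp]) (simp add: field_simps)
    then have "2^m * exp (- (lam * (t - \<tau>) / 2)) = 2^m * exp (- (lam * t / 2)) * exp ((lam/2) * \<tau>)"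
      by (simp only: exp_add mult.assoc)
    then show "ennreal (2^m * exp (- (lam * (t - \<tau>) / 2))) = ennreal (2^m * exp (- (lam * t / 2))) * ennreal (exp ((lam/2) * \<tau>))"
      by (simp add: ennreal_mult mult.assoc)
  qed
  also have "\<dots> = ennreal (2^m * exp (- (lam * t / 2))) * (\<integral>\<^sup>+ \<tau>. ennreal (exp ((lam/2) * \<tau>)) \<partial>Expm lam)"
    by (rule nn_integral_cmult) measurable
  also have "\<dots> = ennreal (2^m * exp (- (lam * t / 2))) * ennreal (lam / (lam - lam/2))"
    using lam by (subst mgf) auto
  also have "\<dots> = ennreal (2^Suc m * exp (- (lam * t / 2)))"
    using lam by (subst ennreal_mult''[symmetric]) (simp_all add: field_simps)
  finally show ?case .
qed

lemma TB2:
  assumes lam: "lam > 0"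
  shows "emeasure (noise_space lam) {\<omega>. ring_time \<omega> m \<le> t} \<le> ennreal (exp (lam * t) * (1/2)^m)"
proof (induction m arbitrary: t)
  case 0
  interpret prob_space "noise_space lam" by (rule prob_noise[OF lam])
  show ?case
  proof (cases "0 \<le> t")
    case True
    then have "1 \<le> exp (lam * t)" using lam by simp
    then show ?thesis using True emeasure_space_1 by simp
  qed simp
next
  case (Suc m)
  have "emeasure (noise_space lam) {\<omega>. ring_time \<omega> (Suc m) \<le> t}
      = (\<integral>\<^sup>+ s0. emeasure (noise_space lam) {\<omega>. ring_time \<omega> m \<le> t - fst s0} \<partial>M0 lam)"
    by (subst REC'[OF lam rt_sets(2)]) (simp add: rt_shift algebra_simps)
  also have "\<dots> \<le> (\<integral>\<^sup>+ s0. ennreal (exp (lam * (t - fst s0)) * (1/2)^m) \<partial>M0 lam)"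
    by (intro nn_integral_mono Suc)
  also have "\<dots> = (\<integral>\<^sup>+ \<tau>. ennreal (exp (lam * (t - \<tau>)) * (1/2)^m) \<partial>Expm lam)"
    by (rule M0_fst[OF lam]) measurable
  also have "\<dots> = (\<integral>\<^sup>+ \<tau>. ennreal (exp (lam * t) * (1/2)^m) * ennreal (exp ((- lam) * \<tau>)) \<partial>Expm lam)"
  proof (rule nn_integral_cong)
    fix \<tau> :: real
    have h: "exp (lam * (t - \<tau>)) = exp (lam * t) * exp ((- lam) * \<tau>)"
      by (simp add: exp_add[symmetric] algebra_simps)
    have "exp (lam * (t - \<tau>)) * (1/2)^m = exp (lam * t) * (1/2)^m * exp ((- lam) * \<tau>)"
      unfolding h by (simp add: mult_ac)
    then show "ennreal (exp (lam * (t - \<tau>)) * (1/2)^m) = ennreal (exp (lam * t) * (1/2)^m) * ennreal (exp ((- lam) * \<tau>))"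
      by (simp add: ennreal_mult mult_ac)
  qed
  also have "\<dots> = ennreal (exp (lam * t) * (1/2)^m) * (\<integral>\<^sup>+ \<tau>. ennreal (exp ((- lam) * \<tau>)) \<partial>Expm lam)"
    by (rule nn_integral_cmult) measurable
  also have "\<dots> = ennreal (exp (lam * t) * (1/2)^m) * ennreal (lam / (lam - (- lam)))"
    using lam by (subst mgf) auto
  also have "\<dots> = ennreal (exp (lam * t) * (1/2)^Suc m)"
    using lam by (subst ennreal_mult''[symmetric]) (simp_all add: field_simps)
  finally show ?case .
qed

lemma undef_null:
  assumes lam: "lam > 0"
  shows "AE \<omega> in noise_space lam. \<exists>k. t < ring_time \<omega> (Suc k)"
proof -
  define N where "N = {\<omega>. \<not> (\<exists>k. t < ring_time \<omega> (Suc k))}"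
  have "{\<omega>\<in>space (noise_space lam). \<exists>k. t < ring_time \<omega> (Suc k)} \<in> sets (noise_space lam)" by measurable
  from sets.compl_sets[OF this] have Nm: "N \<in> sets (noise_space lam)" unfolding N_def by (simp add: set_diff_eq)
  have le: "emeasure (noise_space lam) N \<le> ennreal (exp (lam * t) * (1/2)^Suc m)" for m
  proof -
    have "emeasure (noise_space lam) N \<le> emeasure (noise_space lam) {\<omega>. ring_time \<omega> (Suc m) \<le> t}"
      by (rule emeasure_mono) (auto simp: N_def not_less)
    also have "\<dots> \<le> ennreal (exp (lam * t) * (1/2)^Suc m)" by (rule TB2[OF lam])
    finally show ?thesis .
  qed
  have "(\<lambda>m. exp (lam * t) * (1/2::real)^Suc m) \<longlonglongrightarrow> exp (lam * t) * 0"
    by (intro tendsto_mult tendsto_const LIMSEQ_Suc[OF LIMSEQ_power_zero]) simp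
  then have "(\<lambda>m. ennreal (exp (lam * t) * (1/2)^Suc m)) \<longlonglongrightarrow> ennreal 0"
    by (intro tendsto_ennrealI) simp
  then have "emeasure (noise_space lam) N \<le> ennreal 0"
    by (rule LIMSEQ_le_const) (use le in auto)
  then have "emeasure (noise_space lam) N = 0" by simp
  then show ?thesis using AE_iff_measurable[OF Nm] unfolding N_def by simp
qed


context setting begin

definition Cev :: "real^'n \<Rightarrow> real^'n \<Rightarrow> 'v \<Rightarrow> real \<Rightarrow> nat \<Rightarrow> (nat \<Rightarrow> real \<times> real) \<Rightarrow> bool" where
  "Cev x y s t K \<omega> \<longleftrightarrow> (\<exists>k<K. (\<forall>j\<le>k. snd (jump_state a P \<omega> y s j) = Wc (P x) s \<omega> j) \<and>
      Wc (P x) s \<omega> k \<notin> E \<and> ring_time \<omega> (Suc k) \<le> t \<and>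
      snd (jump_state a P \<omega> y s (Suc k)) \<noteq> Wc (P x) s \<omega> (Suc k))"

definition Cinf :: "real^'n \<Rightarrow> real^'n \<Rightarrow> 'v \<Rightarrow> real \<Rightarrow> (nat \<Rightarrow> real \<times> real) \<Rightarrow> bool" where
  "Cinf x y s t \<omega> \<longleftrightarrow> (\<exists>k. (\<forall>j\<le>k. snd (jump_state a P \<omega> y s j) = Wc (P x) s \<omega> j) \<and>
      Wc (P x) s \<omega> k \<notin> E \<and> ring_time \<omega> (Suc k) \<le> t \<and>
      snd (jump_state a P \<omega> y s (Suc k)) \<noteq> Wc (P x) s \<omega> (Suc k))"

definition Fk :: "real^'n \<Rightarrow> nat \<Rightarrow> 'v \<Rightarrow> real" where
  "Fk x K s = (\<Sum>k<K. Gt (P x) E k s)"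

lemma Gt_nn: "Gt (P x) E n v \<ge> 0"
  by (rule Gt_nonneg) (use P_nn P_s1 P_ab in auto)

lemma Fk_nn: "Fk x K s \<ge> 0"
  unfolding Fk_def by (intro sum_nonneg Gt_nn)

lemma Fk_rec: "Fk x (Suc K) s = (if s \<in> E then 0 else 1) + (\<Sum>u\<in>UNIV. P x s u * Fk x K u)"
proof -
  have G0: "Gt (P x) E 0 s = (if s \<in> E then 0 else 1)"
    unfolding Gt_def by (simp add: sum.delta)
  have GS: "Gt (P x) E (Suc k) s = (\<Sum>u\<in>UNIV. P x s u * Gt (P x) E k u)" for k
    using Gt_step[of "P x" E "Suc 0" k s] by (simp only: mpow_1 add_Suc add_0)
  have "Fk x (Suc K) s = Gt (P x) E 0 s + (\<Sum>k<K. Gt (P x) E (Suc k) s)"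
    unfolding Fk_def by (rule sum.lessThan_Suc_shift)
  also have "(\<Sum>k<K. Gt (P x) E (Suc k) s) = (\<Sum>u\<in>UNIV. P x s u * Fk x K u)"
    unfolding GS Fk_def by (simp add: sum_distrib_left) (rule sum.swap)
  finally show ?thesis using G0 by simp
qed

lemma Cev_sets[measurable]: "{\<omega>. Cev x y s t K \<omega>} \<in> sets (noise_space lam)"
proof -
  have "{\<omega>\<in>space (noise_space lam). Cev x y s t K \<omega>} \<in> sets (noise_space lam)"
    unfolding Cev_def by measurable
  then show ?thesis by simp
qed

lemma Cev_shift:
  assumes "Cev x y s t (Suc K) (case_nat s0 \<omega>)"
  shows "(fst s0 \<le> t \<and> s \<notin> E \<and> choose_state (P (flow a s (fst s0) y) s) (snd s0) \<noteq> choose_state (P x s) (snd s0)) \<or>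
    (choose_state (P (flow a s (fst s0) y) s) (snd s0) = choose_state (P x s) (snd s0) \<and>
     Cev x (flow a s (fst s0) y) (choose_state (P (flow a s (fst s0) y) s) (snd s0)) (t - fst s0) K \<omega>)"
proof -
  define y1 where "y1 = flow a s (fst s0) y"
  define V1 where "V1 = choose_state (P y1 s) (snd s0)"
  define W1 where "W1 = choose_state (P x s) (snd s0)"
  have JS: "snd (jump_state a P (case_nat s0 \<omega>) y s (Suc j)) = snd (jump_state a P \<omega> y1 V1 j)" for j
    using js_shift[of a P s0 \<omega> y s j] unfolding y1_def V1_def by simp
  have WS: "Wc (P x) s (case_nat s0 \<omega>) (Suc j) = Wc (P x) W1 \<omega> j" for j
    using Wc_shift[of "P x" s s0 \<omega> j] unfolding W1_def by simp
  have RS: "ring_time (case_nat s0 \<omega>) (Suc j) = fst s0 + ring_time \<omega> j" for j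
    by (rule rt_shift)
  from assms obtain k where k: "k < Suc K"
    and ag: "\<forall>j\<le>k. snd (jump_state a P (case_nat s0 \<omega>) y s j) = Wc (P x) s (case_nat s0 \<omega>) j"
    and nE: "Wc (P x) s (case_nat s0 \<omega>) k \<notin> E" and rt: "ring_time (case_nat s0 \<omega>) (Suc k) \<le> t"
    and ne: "snd (jump_state a P (case_nat s0 \<omega>) y s (Suc k)) \<noteq> Wc (P x) s (case_nat s0 \<omega>) (Suc k)"
    unfolding Cev_def by blast
  show ?thesis
  proof (cases k)
    case 0
    have "fst s0 \<le> t" using rt RS[of 0] 0 by simp
    moreover have "s \<notin> E" using nE 0 by simp
    moreover have "V1 \<noteq> W1" using ne JS[of 0] WS[of 0] 0 by (simp del: jump_state.simps Wc.simps add: jump_state.simps(1) Wc.simps(1))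
    ultimately show ?thesis unfolding y1_def V1_def W1_def by simp
  next
    case (Suc k')
    have "snd (jump_state a P (case_nat s0 \<omega>) y s (Suc 0)) = Wc (P x) s (case_nat s0 \<omega>) (Suc 0)"
    proof -
      have "Suc 0 \<le> k" using Suc by simp
      then show ?thesis using ag by blast
    qed
    then have VW: "V1 = W1" using JS[of 0] WS[of 0] by (simp del: jump_state.simps Wc.simps add: jump_state.simps(1) Wc.simps(1))
    have "Cev x y1 V1 (t - fst s0) K \<omega>" unfolding Cev_def
    proof (intro exI[of _ k'] conjI allI impI)
      show "k' < K" using k Suc by simp
      fix j assume "j \<le> k'"
      then have "Suc j \<le> k" using Suc by simp
      then have "snd (jump_state a P (case_nat s0 \<omega>) y s (Suc j)) = Wc (P x) s (case_nat s0 \<omega>) (Suc j)"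
        using ag by blast
      then show "snd (jump_state a P \<omega> y1 V1 j) = Wc (P x) V1 \<omega> j"
        using JS[of j] WS[of j] VW by (simp del: jump_state.simps Wc.simps add: jump_state.simps(1) Wc.simps(1))
    next
      show "Wc (P x) V1 \<omega> k' \<notin> E" using nE Suc WS[of k'] VW by (simp del: jump_state.simps Wc.simps add: jump_state.simps(1) Wc.simps(1))
      show "ring_time \<omega> (Suc k') \<le> t - fst s0" using rt Suc RS[of "Suc k'"] by simp
      show "snd (jump_state a P \<omega> y1 V1 (Suc k')) \<noteq> Wc (P x) V1 \<omega> (Suc k')"
        using ne Suc JS[of "Suc k'"] WS[of "Suc k'"] VW by (simp del: jump_state.simps Wc.simps add: jump_state.simps(1) Wc.simps(1))
    qed
    then show ?thesis using VW unfolding y1_def V1_def W1_def by simp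
  qed
qed

lemma l1_step: "0 \<le> \<tau> \<Longrightarrow> l1norm (flow a s \<tau> y - x) \<le> l1norm (y - x) + real CARD('n) * Ma * \<tau>"
proof -
  assume t: "0 \<le> \<tau>"
  have "l1norm (flow a s \<tau> y - x) = l1norm ((flow a s \<tau> y - y) + (y - x))" by simp
  also have "\<dots> \<le> l1norm (flow a s \<tau> y - y) + l1norm (y - x)" by (rule l1norm_tri)
  also have "\<dots> \<le> real CARD('n) * Ma * \<bar>\<tau>\<bar> + l1norm (y - x)" using flow_l1disp by simp
  finally show ?thesis using t by simp
qed

lemma S1_bound:
  assumes lam: "lam > 0"
  shows "emeasure (M0 lam) {s0. fst s0 \<le> t \<and> s \<notin> E \<and> choose_state (P (flow a s (fst s0) y) s) (snd s0) \<noteq> choose_state (P x s) (snd s0)}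
    \<le> ennreal (real CARD('v) * K0 * max 0 (l1norm (y - x) + real CARD('n) * Ma * t) * (if s \<in> E then 0 else 1))"
proof (cases "s \<in> E")
  case True then show ?thesis by simp
next
  case False
  define S1 where "S1 = {s0. fst s0 \<le> t \<and> s \<notin> E \<and> choose_state (P (flow a s (fst s0) y) s) (snd s0) \<noteq> choose_state (P x s) (snd s0)}"
  define R where "R = real CARD('v) * K0 * max 0 (l1norm (y - x) + real CARD('n) * Ma * t)"
  have S1m: "S1 \<in> sets (M0 lam)"
  proof -
    have "{s0 \<in> space (M0 lam). fst s0 \<le> t \<and> s \<notin> E \<and> choose_state (P (flow a s (fst s0) y) s) (snd s0) \<noteq> choose_state (P x s) (snd s0)} \<in> sets (M0 lam)"
      by measurable
    then show ?thesis unfolding S1_def by simp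
  qed
  interpret E: prob_space "Expm lam" by (rule prob_Expm[OF lam])
  have "emeasure (M0 lam) S1 = (\<integral>\<^sup>+ s0. indicator S1 s0 \<partial>M0 lam)"
    by (rule nn_integral_indicator[symmetric, OF S1m])
  also have "\<dots> = (\<integral>\<^sup>+ \<tau>. \<integral>\<^sup>+ u. indicator S1 (\<tau>, u) \<partial>Unif \<partial>Expm lam)"
    by (rule M0_fubini[OF lam]) (rule borel_measurable_indicator[OF S1m])
  also have "\<dots> \<le> (\<integral>\<^sup>+ \<tau>. ennreal R \<partial>Expm lam)"
  proof (rule nn_integral_mono_AE)
    show "AE \<tau> in Expm lam. (\<integral>\<^sup>+ u. indicator S1 (\<tau>, u) \<partial>Unif) \<le> ennreal R"
      using AE_Expm[of lam]
    proof eventually_elim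
      fix \<tau> :: real assume t0: "0 \<le> \<tau>"
      have sl: "{u. (\<tau>, u) \<in> S1} \<in> sets Unif"
        using sets_Pair1[of S1 "Expm lam" Unif \<tau>] S1m unfolding M0_def by (simp add: vimage_def)
      have "(\<integral>\<^sup>+ u. indicator S1 (\<tau>, u) \<partial>Unif) = emeasure Unif {u. (\<tau>, u) \<in> S1}"
        using nn_integral_indicator[OF sl] by (simp add: indicator_def)
      also have "\<dots> \<le> ennreal R"
      proof (cases "\<tau> \<le> t")
        case False
        then have "{u. (\<tau>, u) \<in> S1} = {}" unfolding S1_def by auto
        then show ?thesis by simp
      next
        case True
        have "emeasure Unif {u. (\<tau>, u) \<in> S1} \<le> emeasure Unif {u. choose_state (P (flow a s \<tau> y) s) u \<noteq> choose_state (P x s) u}"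
          by (rule emeasure_mono) (auto simp: S1_def)
        also have "\<dots> \<le> ennreal (real CARD('v) * (\<Sum>w\<in>UNIV. \<bar>P (flow a s \<tau> y) s w - P x s w\<bar>))"
          by (rule Unif_DIS)
        also have "\<dots> \<le> ennreal R"
        proof (rule ennreal_leI)
          have "(\<Sum>w\<in>UNIV. \<bar>P (flow a s \<tau> y) s w - P x s w\<bar>) \<le> K0 * l1norm (flow a s \<tau> y - x)" by (rule P_lip)
          also have "\<dots> \<le> K0 * max 0 (l1norm (y - x) + real CARD('n) * Ma * t)"
          proof (rule mult_left_mono)
            have "l1norm (flow a s \<tau> y - x) \<le> l1norm (y - x) + real CARD('n) * Ma * \<tau>" by (rule l1_step[OF t0])
            also have "\<dots> \<le> l1norm (y - x) + real CARD('n) * Ma * t"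
              using True Ma_nonneg by (intro add_left_mono mult_left_mono) auto
            finally show "l1norm (flow a s \<tau> y - x) \<le> max 0 (l1norm (y - x) + real CARD('n) * Ma * t)" by simp
          qed (use K0_pos in simp)
          finally have "(\<Sum>w\<in>UNIV. \<bar>P (flow a s \<tau> y) s w - P x s w\<bar>) \<le> K0 * max 0 (l1norm (y - x) + real CARD('n) * Ma * t)" .
          from mult_left_mono[OF this, of "real CARD('v)"]
          show "real CARD('v) * (\<Sum>w\<in>UNIV. \<bar>P (flow a s \<tau> y) s w - P x s w\<bar>) \<le> R"
            unfolding R_def by (simp add: mult.assoc)
        qed
        finally show ?thesis .
      qed
      finally show "(\<integral>\<^sup>+ u. indicator S1 (\<tau>, u) \<partial>Unif) \<le> ennreal R" .
    qed
  qed
  also have "\<dots> = ennreal R" using E.emeasure_space_1 by simp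
  finally show ?thesis using False unfolding S1_def R_def by simp
qed

end


context setting begin

lemma coup:
  assumes lam: "lam > 0"
  shows "emeasure (noise_space lam) {\<omega>. Cev x y s t K \<omega>}
    \<le> ennreal (real CARD('v) * K0 * max 0 (l1norm (y - x) + real CARD('n) * Ma * t) * Fk x K s)"
proof (induction K arbitrary: y s t)
  case 0 show ?case by (simp add: Cev_def)
next
  case (Suc K)
  define cc where "cc = real CARD('v) * K0"
  define M1 where "M1 = real CARD('n) * Ma"
  define r where "r = max 0 (l1norm (y - x) + M1 * t)"
  have cc0: "cc \<ge> 0" unfolding cc_def using K0_pos by simp
  have r0: "r \<ge> 0" unfolding r_def by simp
  define y1 where "y1 \<tau> = flow a s \<tau> y" for \<tau>
  define V1 where "V1 s0 = choose_state (P (y1 (fst s0)) s) (snd s0)" for s0 :: "real \<times> real"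
  define W1 where "W1 s0 = choose_state (P x s) (snd s0)" for s0 :: "real \<times> real"
  define S1 where "S1 = {s0. fst s0 \<le> t \<and> s \<notin> E \<and> V1 s0 \<noteq> W1 s0}"
  have S1m: "S1 \<in> sets (M0 lam)"
  proof -
    have "{s0 \<in> space (M0 lam). fst s0 \<le> t \<and> s \<notin> E \<and> choose_state (P (flow a s (fst s0) y) s) (snd s0) \<noteq> choose_state (P x s) (snd s0)} \<in> sets (M0 lam)"
      by measurable
    then show ?thesis unfolding S1_def V1_def W1_def y1_def by simp
  qed
  have slice: "emeasure (noise_space lam) {\<omega>. Cev x y s t (Suc K) (case_nat s0 \<omega>)}
     \<le> indicator S1 s0 + (if V1 s0 = W1 s0 then emeasure (noise_space lam) {\<omega>. Cev x (y1 (fst s0)) (V1 s0) (t - fst s0) K \<omega>} else 0)" for s0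
  proof -
    interpret prob_space "noise_space lam" by (rule prob_noise[OF lam])
    define B1 where "B1 = (if s0 \<in> S1 then UNIV else ({} :: (nat \<Rightarrow> real \<times> real) set))"
    define B2 where "B2 = (if V1 s0 = W1 s0 then {\<omega>. Cev x (y1 (fst s0)) (V1 s0) (t - fst s0) K \<omega>} else {})"
    have B1m: "B1 \<in> sets (noise_space lam)" unfolding B1_def using sets.top[of "noise_space lam"] by auto
    have B2m: "B2 \<in> sets (noise_space lam)" unfolding B2_def by auto
    have sub: "{\<omega>. Cev x y s t (Suc K) (case_nat s0 \<omega>)} \<subseteq> B1 \<union> B2"
      using Cev_shift[of x y s t K s0] unfolding B1_def B2_def S1_def V1_def W1_def y1_def by auto
    have "emeasure (noise_space lam) {\<omega>. Cev x y s t (Suc K) (case_nat s0 \<omega>)} \<le> emeasure (noise_space lam) (B1 \<union> B2)"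
      by (rule emeasure_mono[OF sub]) (use B1m B2m in auto)
    also have "\<dots> \<le> emeasure (noise_space lam) B1 + emeasure (noise_space lam) B2"
      by (rule emeasure_subadditive[OF B1m B2m])
    also have "emeasure (noise_space lam) B1 = indicator S1 s0"
      unfolding B1_def using emeasure_space_1 by (auto simp: indicator_def)
    also have "emeasure (noise_space lam) B2 = (if V1 s0 = W1 s0 then emeasure (noise_space lam) {\<omega>. Cev x (y1 (fst s0)) (V1 s0) (t - fst s0) K \<omega>} else 0)"
      unfolding B2_def by simp
    finally show ?thesis .
  qed
  have ae: "AE s0 in M0 lam. emeasure (noise_space lam) {\<omega>. Cev x y s t (Suc K) (case_nat s0 \<omega>)}
      \<le> indicator S1 s0 + ennreal (cc * r * Fk x K (W1 s0))"
    using AE_M0[OF lam]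
  proof eventually_elim
    fix s0 :: "real \<times> real" assume g: "0 \<le> fst s0 \<and> 0 \<le> snd s0 \<and> snd s0 < 1"
    have "(if V1 s0 = W1 s0 then emeasure (noise_space lam) {\<omega>. Cev x (y1 (fst s0)) (V1 s0) (t - fst s0) K \<omega>} else 0)
        \<le> ennreal (cc * r * Fk x K (W1 s0))"
    proof (cases "V1 s0 = W1 s0")
      case True
      have "emeasure (noise_space lam) {\<omega>. Cev x (y1 (fst s0)) (V1 s0) (t - fst s0) K \<omega>}
          \<le> ennreal (cc * max 0 (l1norm (y1 (fst s0) - x) + M1 * (t - fst s0)) * Fk x K (V1 s0))"
        using Suc.IH unfolding cc_def M1_def .
      also have "\<dots> \<le> ennreal (cc * r * Fk x K (W1 s0))"
      proof (rule ennreal_leI)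
        have "l1norm (y1 (fst s0) - x) \<le> l1norm (y - x) + M1 * fst s0"
          unfolding y1_def M1_def using l1_step g by auto
        then have "l1norm (y1 (fst s0) - x) + M1 * (t - fst s0) \<le> l1norm (y - x) + M1 * t"
          by (simp add: algebra_simps)
        then have "max 0 (l1norm (y1 (fst s0) - x) + M1 * (t - fst s0)) \<le> r"
          unfolding r_def by (auto simp: max_def)
        then show "cc * max 0 (l1norm (y1 (fst s0) - x) + M1 * (t - fst s0)) * Fk x K (V1 s0) \<le> cc * r * Fk x K (W1 s0)"
        proof -
          have "cc * max 0 (l1norm (y1 (fst s0) - x) + M1 * (t - fst s0)) \<le> cc * r"
            using \<open>max 0 (l1norm (y1 (fst s0) - x) + M1 * (t - fst s0)) \<le> r\<close> cc0 by (rule mult_left_mono)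
          then show ?thesis unfolding True by (rule mult_right_mono[OF _ Fk_nn])
        qed
      qed
      finally show ?thesis using True by simp
    qed simp
    then show "emeasure (noise_space lam) {\<omega>. Cev x y s t (Suc K) (case_nat s0 \<omega>)}
      \<le> indicator S1 s0 + ennreal (cc * r * Fk x K (W1 s0))"
      using slice[of s0] by (meson add_left_mono order_trans)
  qed
  have cm: "(\<lambda>s0. W1 s0) \<in> measurable (M0 lam) (count_space UNIV)" unfolding W1_def by measurable
  have m2: "(\<lambda>s0. ennreal (cc * r * Fk x K (W1 s0))) \<in> borel_measurable (M0 lam)"
    by (rule measurable_compose[OF cm]) simp
  have I1: "(\<integral>\<^sup>+ s0. indicator S1 s0 \<partial>M0 lam) \<le> ennreal (cc * r * (if s \<in> E then 0 else 1))"
  proof -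
    have "(\<integral>\<^sup>+ s0. indicator S1 s0 \<partial>M0 lam) = emeasure (M0 lam) S1" by (rule nn_integral_indicator[OF S1m])
    also have "\<dots> \<le> ennreal (cc * r * (if s \<in> E then 0 else 1))"
      using S1_bound[OF lam, of t s y x] unfolding S1_def V1_def W1_def y1_def cc_def r_def M1_def by (simp add: mult.assoc)
    finally show ?thesis .
  qed
  have I2: "(\<integral>\<^sup>+ s0. ennreal (cc * r * Fk x K (W1 s0)) \<partial>M0 lam) = ennreal (\<Sum>u\<in>UNIV. P x s u * (cc * r * Fk x K u))"
  proof -
    have "(\<integral>\<^sup>+ s0. ennreal (cc * r * Fk x K (W1 s0)) \<partial>M0 lam) = (\<Sum>u\<in>UNIV. ennreal (P x s u) * ennreal (cc * r * Fk x K u))"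
      unfolding W1_def by (rule INT_choose[OF lam]) (use P_nn P_s1 in auto)
    also have "\<dots> = (\<Sum>u\<in>UNIV. ennreal (P x s u * (cc * r * Fk x K u)))"
      using P_nn cc0 r0 Fk_nn by (simp add: ennreal_mult)
    also have "\<dots> = ennreal (\<Sum>u\<in>UNIV. P x s u * (cc * r * Fk x K u))"
      using P_nn cc0 r0 Fk_nn by (intro sum_ennreal) simp
    finally show ?thesis .
  qed
  have tot: "ennreal (cc * r * (if s \<in> E then 0 else 1)) + ennreal (\<Sum>u\<in>UNIV. P x s u * (cc * r * Fk x K u))
      = ennreal (cc * r * Fk x (Suc K) s)"
  proof -
    have nn2: "0 \<le> (\<Sum>u\<in>UNIV. P x s u * (cc * r * Fk x K u))"
      using P_nn cc0 r0 Fk_nn by (intro sum_nonneg) simp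
    have "ennreal (cc * r * (if s \<in> E then 0 else 1)) + ennreal (\<Sum>u\<in>UNIV. P x s u * (cc * r * Fk x K u))
        = ennreal (cc * r * (if s \<in> E then 0 else 1) + (\<Sum>u\<in>UNIV. P x s u * (cc * r * Fk x K u)))"
      using cc0 r0 nn2 by (intro ennreal_plus[symmetric]) auto
    also have "cc * r * (if s \<in> E then 0 else 1) + (\<Sum>u\<in>UNIV. P x s u * (cc * r * Fk x K u)) = cc * r * Fk x (Suc K) s"
      unfolding Fk_rec by (simp add: sum_distrib_left algebra_simps)
    finally show ?thesis .
  qed
  have "emeasure (noise_space lam) {\<omega>. Cev x y s t (Suc K) \<omega>}
      = (\<integral>\<^sup>+ s0. emeasure (noise_space lam) {\<omega>. Cev x y s t (Suc K) (case_nat s0 \<omega>)} \<partial>M0 lam)"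
    by (rule REC'[OF lam Cev_sets])
  also have "\<dots> \<le> (\<integral>\<^sup>+ s0. indicator S1 s0 + ennreal (cc * r * Fk x K (W1 s0)) \<partial>M0 lam)"
    by (rule nn_integral_mono_AE[OF ae])
  also have "\<dots> = (\<integral>\<^sup>+ s0. indicator S1 s0 \<partial>M0 lam) + (\<integral>\<^sup>+ s0. ennreal (cc * r * Fk x K (W1 s0)) \<partial>M0 lam)"
    by (rule nn_integral_add) (use S1m m2 in auto)
  also have "\<dots> \<le> ennreal (cc * r * (if s \<in> E then 0 else 1)) + ennreal (\<Sum>u\<in>UNIV. P x s u * (cc * r * Fk x K u))"
    using I1 I2 by (intro add_mono) auto
  also have "\<dots> = ennreal (cc * r * Fk x (Suc K) s)" by (rule tot)
  finally show ?case unfolding cc_def M1_def r_def .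
qed

end


context setting begin

lemma coup_inf:
  assumes lam: "lam > 0" and Fb: "\<And>K. Fk x K s \<le> Fb"
  shows "emeasure (noise_space lam) {\<omega>. Cinf x y s t \<omega>}
    \<le> ennreal (real CARD('v) * K0 * max 0 (l1norm (y - x) + real CARD('n) * Ma * t) * Fb)"
proof -
  define R where "R = real CARD('v) * K0 * max 0 (l1norm (y - x) + real CARD('n) * Ma * t)"
  have R0: "R \<ge> 0" unfolding R_def using K0_pos by simp
  have eq: "{\<omega>. Cinf x y s t \<omega>} = (\<Union>K. {\<omega>. Cev x y s t K \<omega>})" unfolding Cinf_def Cev_def by blast
  have inc: "incseq (\<lambda>K. {\<omega>. Cev x y s t K \<omega>})"
    unfolding incseq_def Cev_def by (auto intro: less_le_trans)
  have "emeasure (noise_space lam) {\<omega>. Cinf x y s t \<omega>} = (SUP K. emeasure (noise_space lam) {\<omega>. Cev x y s t K \<omega>})"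
    unfolding eq by (rule SUP_emeasure_incseq[symmetric]) (use inc in auto)
  also have "\<dots> \<le> ennreal (R * Fb)"
  proof (rule SUP_least)
    fix K
    have "emeasure (noise_space lam) {\<omega>. Cev x y s t K \<omega>} \<le> ennreal (R * Fk x K s)"
      using coup[OF lam] unfolding R_def .
    also have "\<dots> \<le> ennreal (R * Fb)" using Fb R0 by (intro ennreal_leI mult_left_mono) auto
    finally show "emeasure (noise_space lam) {\<omega>. Cev x y s t K \<omega>} \<le> ennreal (R * Fb)" .
  qed
  finally show ?thesis unfolding R_def .
qed

lemma absch: "e \<in> E \<Longrightarrow> 0 \<le> u \<Longrightarrow> u < 1 \<Longrightarrow> choose_state (P y e) u = e"
  by (rule choose_delta) (use P_nn P_s1 P_ab in auto)

lemma main_incl: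
  assumes t: "0 < t" and good: "\<forall>k. 0 \<le> fst (\<omega> k) \<and> 0 \<le> snd (\<omega> k) \<and> snd (\<omega> k) < 1"
    and def: "\<exists>k. t < ring_time \<omega> (Suc k)" and nC: "\<not> Cinf x x v t \<omega>"
    and nT: "\<not> t < ring_time \<omega> m" and WE: "Wc (P x) v \<omega> m \<in> E"
  shows "V_proc a P x v t \<omega> = Wc (P x) v \<omega> m"
proof -
  define N where "N = (LEAST k. t < ring_time \<omega> (Suc k))"
  have V: "V_proc a P x v t \<omega> = snd (jump_state a P \<omega> x v N)" unfolding V_proc_def N_def using def by simp
  have mono: "ring_time \<omega> j \<le> ring_time \<omega> k" if "j \<le> k" for j k
    using good that by (intro rt_mono) auto
  have Wabs: "Wc (P x) v \<omega> j = Wc (P x) v \<omega> m" if "m \<le> j" for j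
    using that
  proof (induction j rule: dec_induct)
    case base show ?case ..
  next
    case (step j) then show ?case using absch[OF WE] good by simp
  qed
  have Nm: "m \<le> N"
  proof (rule ccontr)
    assume "\<not> m \<le> N" then have SN: "Suc N \<le> m" by simp
    have "t < ring_time \<omega> (Suc N)" unfolding N_def by (rule LeastI_ex[OF def])
    also have "\<dots> \<le> ring_time \<omega> m" by (rule mono[OF SN])
    finally show False using nT by simp
  qed
  have TN: "ring_time \<omega> N \<le> t"
  proof (cases N)
    case 0 then show ?thesis using t by simp
  next
    case (Suc j)
    have "j < N" using Suc by simp
    then have "\<not> t < ring_time \<omega> (Suc j)" unfolding N_def by (rule not_less_Least)
    then show ?thesis using Suc by simp
  qed
  have agree: "\<forall>j\<le>k. snd (jump_state a P \<omega> x v j) = Wc (P x) v \<omega> j" if "k \<le> N" for k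
    using that
  proof (induction k)
    case 0 then show ?case by simp
  next
    case (Suc k)
    have IH: "\<forall>j\<le>k. snd (jump_state a P \<omega> x v j) = Wc (P x) v \<omega> j" using Suc by simp
    have "snd (jump_state a P \<omega> x v (Suc k)) = Wc (P x) v \<omega> (Suc k)"
    proof (cases "Wc (P x) v \<omega> k \<in> E")
      case True
      have "snd (jump_state a P \<omega> x v (Suc k)) = choose_state (P (fst (jump_state a P \<omega> x v (Suc k))) (snd (jump_state a P \<omega> x v k))) (snd (\<omega> k))"
        by (rule js_snd)
      also have "\<dots> = choose_state (P (fst (jump_state a P \<omega> x v (Suc k))) (Wc (P x) v \<omega> k)) (snd (\<omega> k))"
        using IH by simp
      also have "\<dots> = Wc (P x) v \<omega> k" using True good absch by blast
      also have "\<dots> = Wc (P x) v \<omega> (Suc k)" using True good absch by simp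
      finally show ?thesis .
    next
      case False
      have "ring_time \<omega> (Suc k) \<le> t" using mono[of "Suc k" N] Suc.prems TN by simp
      then show ?thesis using nC IH False unfolding Cinf_def by blast
    qed
    then show ?case using IH by (auto simp: le_Suc_eq)
  qed
  have "snd (jump_state a P \<omega> x v N) = Wc (P x) v \<omega> N" using agree[of N] by simp
  then show ?thesis using V Wabs[OF Nm] by simp
qed

lemma Cinf_sets[measurable]: "{\<omega>. Cinf x y s t \<omega>} \<in> sets (noise_space lam)"
proof -
  have "{\<omega>\<in>space (noise_space lam). Cinf x y s t \<omega>} \<in> sets (noise_space lam)"
    unfolding Cinf_def by measurable
  then show ?thesis by simp
qed

lemma est:
  assumes lam: "lam > 0" and t: "t > 0" and Fb: "\<And>K. Fk x K v \<le> Fb"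
  shows "emeasure (noise_space lam) {\<omega>. V_proc a P x v t \<omega> \<noteq> Wc (P x) v \<omega> m}
     \<le> ennreal (real CARD('v) * K0 * (real CARD('n) * Ma * t) * Fb) + ennreal (2^m * exp (- (lam * t / 2)))
       + ennreal (Gt (P x) E m v)"
proof -
  define B1 where "B1 = {\<omega>. Cinf x x v t \<omega>}"
  define B2 where "B2 = {\<omega>. t < ring_time \<omega> m}"
  define B3 where "B3 = {\<omega>. Wc (P x) v \<omega> m \<notin> E}"
  have B1m: "B1 \<in> sets (noise_space lam)" unfolding B1_def by (rule Cinf_sets)
  have B2m: "B2 \<in> sets (noise_space lam)" unfolding B2_def by (rule rt_sets)
  have B3m: "B3 \<in> sets (noise_space lam)"
    using measurable_sets[OF Wc_meas[of "P x" v m lam], of "UNIV - E"] unfolding B3_def by (simp add: vimage_def)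
  have ae: "AE \<omega> in noise_space lam. \<omega> \<in> {\<omega>. V_proc a P x v t \<omega> \<noteq> Wc (P x) v \<omega> m} \<longrightarrow> \<omega> \<in> B1 \<union> B2 \<union> B3"
    using AE_good[OF lam] undef_null[OF lam, of t]
  proof eventually_elim
    case (elim \<omega>)
    then show ?case using main_incl[OF t elim(1) elim(2), of x v m] unfolding B1_def B2_def B3_def by blast
  qed
  have "emeasure (noise_space lam) {\<omega>. V_proc a P x v t \<omega> \<noteq> Wc (P x) v \<omega> m} \<le> emeasure (noise_space lam) (B1 \<union> B2 \<union> B3)"
    by (rule emeasure_mono_AE[OF ae]) (use B1m B2m B3m in auto)
  also have "\<dots> \<le> emeasure (noise_space lam) (B1 \<union> B2) + emeasure (noise_space lam) B3"
    by (rule emeasure_subadditive) (use B1m B2m B3m in auto)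
  also have "\<dots> \<le> emeasure (noise_space lam) B1 + emeasure (noise_space lam) B2 + emeasure (noise_space lam) B3"
    using emeasure_subadditive[OF B1m B2m] by (intro add_right_mono)
  also have "emeasure (noise_space lam) B1 \<le> ennreal (real CARD('v) * K0 * (real CARD('n) * Ma * t) * Fb)"
  proof -
    have "max 0 (l1norm (x - x) + real CARD('n) * Ma * t) = real CARD('n) * Ma * t"
      using Ma_nonneg t by (simp add: l1norm_def)
    then show ?thesis using coup_inf[OF lam Fb, of x t] unfolding B1_def by simp
  qed
  also have "emeasure (noise_space lam) B2 \<le> ennreal (2^m * exp (- (lam * t / 2)))"
    unfolding B2_def by (rule TB1[OF lam])
  also have "emeasure (noise_space lam) B3 = ennreal (Gt (P x) E m v)"
  proof -
    have "B3 = (\<Union>w\<in>UNIV - E. {\<omega>. Wc (P x) v \<omega> m = w})" unfolding B3_def by auto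
    then have "emeasure (noise_space lam) B3 = (\<Sum>w\<in>UNIV - E. emeasure (noise_space lam) {\<omega>. Wc (P x) v \<omega> m = w})"
    proof (simp only:, intro sum_emeasure[symmetric])
      show "(\<lambda>w. {\<omega>. Wc (P x) v \<omega> m = w}) ` (UNIV - E) \<subseteq> sets (noise_space lam)"
      proof -
        have "{\<omega>. Wc (P x) v \<omega> m = w} \<in> sets (noise_space lam)" for w
          using measurable_sets[OF Wc_meas[of "P x" v m lam], of "{w}"] by (simp add: vimage_def)
        then show ?thesis by auto
      qed
      show "disjoint_family_on (\<lambda>w. {\<omega>. Wc (P x) v \<omega> m = w}) (UNIV - E)"
        by (auto simp: disjoint_family_on_def)
    qed simp
    also have "\<dots> = (\<Sum>w\<in>UNIV - E. ennreal (mpow (P x) m v w))"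
      using W_law[OF lam, of "P x"] P_nn P_s1 by simp
    also have "\<dots> = ennreal (Gt (P x) E m v)"
      unfolding Gt_def using mpow_nonneg'[of "P x"] P_nn by (intro sum_ennreal) auto
    finally show ?thesis .
  qed
  finally show ?thesis by (simp add: add_mono)
qed

end


lemma tv_pair:
  fixes X Y :: "'a \<Rightarrow> 'v::finite"
  assumes M: "prob_space M" and X[measurable]: "X \<in> measurable M (count_space UNIV)"
    and Y[measurable]: "Y \<in> measurable M (count_space UNIV)"
  shows "(\<Sum>w\<in>UNIV. \<bar>measure M {\<omega>\<in>space M. X \<omega> = w} - measure M {\<omega>\<in>space M. Y \<omega> = w}\<bar>)
    \<le> 2 * measure M {\<omega>\<in>space M. X \<omega> \<noteq> Y \<omega>}"
proof -
  interpret prob_space M by fact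
  define A where "A w = {\<omega>\<in>space M. X \<omega> = w}" for w
  define B where "B w = {\<omega>\<in>space M. Y \<omega> = w}" for w
  define D where "D = {\<omega>\<in>space M. X \<omega> \<noteq> Y \<omega>}"
  have Am: "A w \<in> sets M" for w unfolding A_def by measurable
  have Bm: "B w \<in> sets M" for w unfolding B_def by measurable
  have Dm: "D \<in> sets M" unfolding D_def by measurable
  have key: "\<bar>measure M (A w) - measure M (B w)\<bar> \<le> measure M (A w \<inter> D) + measure M (B w \<inter> D)" for w
  proof -
    have "measure M (A w) = measure M ((A w \<inter> B w) \<union> (A w \<inter> D))"
      by (rule arg_cong[where f="measure M"]) (auto simp: A_def B_def D_def)
    also have "\<dots> = measure M (A w \<inter> B w) + measure M (A w \<inter> D)"
      by (rule finite_measure_Union) (use Am Bm Dm in \<open>auto simp: A_def B_def D_def\<close>)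
    finally have 1: "measure M (A w) = measure M (A w \<inter> B w) + measure M (A w \<inter> D)" .
    have "measure M (B w) = measure M ((A w \<inter> B w) \<union> (B w \<inter> D))"
      by (rule arg_cong[where f="measure M"]) (auto simp: A_def B_def D_def)
    also have "\<dots> = measure M (A w \<inter> B w) + measure M (B w \<inter> D)"
      by (rule finite_measure_Union) (use Am Bm Dm in \<open>auto simp: A_def B_def D_def\<close>)
    finally have 2: "measure M (B w) = measure M (A w \<inter> B w) + measure M (B w \<inter> D)" .
    have "0 \<le> measure M (A w \<inter> D)" "0 \<le> measure M (B w \<inter> D)" by auto
    then show ?thesis using 1 2 by (auto simp: abs_le_iff)
  qed
  have SA: "(\<Sum>w\<in>UNIV. measure M (A w \<inter> D)) = measure M D"
  proof -
    have "D = (\<Union>w\<in>UNIV. A w \<inter> D)" by (auto simp: A_def D_def)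
    moreover have "measure M (\<Union>w\<in>UNIV. A w \<inter> D) = (\<Sum>w\<in>UNIV. measure M (A w \<inter> D))"
      by (rule finite_measure_finite_Union) (use Am Dm in \<open>auto simp: disjoint_family_on_def A_def\<close>)
    ultimately show ?thesis by simp
  qed
  have SB: "(\<Sum>w\<in>UNIV. measure M (B w \<inter> D)) = measure M D"
  proof -
    have "D = (\<Union>w\<in>UNIV. B w \<inter> D)" by (auto simp: B_def D_def)
    moreover have "measure M (\<Union>w\<in>UNIV. B w \<inter> D) = (\<Sum>w\<in>UNIV. measure M (B w \<inter> D))"
      by (rule finite_measure_finite_Union) (use Bm Dm in \<open>auto simp: disjoint_family_on_def B_def\<close>)
    ultimately show ?thesis by simp
  qed
  have "(\<Sum>w\<in>UNIV. \<bar>measure M (A w) - measure M (B w)\<bar>) \<le> (\<Sum>w\<in>UNIV. measure M (A w \<inter> D) + measure M (B w \<inter> D))"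
    by (rule sum_mono[OF key])
  also have "\<dots> = 2 * measure M D" using SA SB by (simp add: sum.distrib)
  finally show ?thesis unfolding A_def B_def D_def .
qed

lemma measure_le_ennreal:
  assumes "prob_space M" "emeasure M A \<le> ennreal b" "0 \<le> b" shows "measure M A \<le> b"
proof -
  interpret prob_space M by fact
  show ?thesis using assms(2,3) by (simp add: emeasure_eq_measure)
qed


lemma abs_tri3: "\<bar>(a::real) - c\<bar> \<le> \<bar>a - b\<bar> + \<bar>b - c\<bar>"
  by arith

theorem mainTheorem5:
  fixes a :: "real^'n \<Rightarrow> 'v::finite \<Rightarrow> real^'n"
    and P :: "real^'n \<Rightarrow> 'v \<Rightarrow> 'v \<Rightarrow> real"
    and E :: "'v set"
  assumes a_cont: "\<And>v. continuous_on UNIV (\<lambda>x. a x v)"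
    and a_bdd: "\<And>v. bounded (range (\<lambda>x. a x v))"
    and a_lip: "\<exists>La. \<forall>x y v. dist (a x v) (a y v) \<le> La * dist x y"
    and stoch: "\<And>x v w. P x v w \<ge> 0" "\<And>x v. (\<Sum>w\<in>UNIV. P x v w) = 1"
    and absorbing: "\<And>x e. e \<in> E \<Longrightarrow> P x e e = 1"
    and reach: "\<exists>n z0. n \<ge> 1 \<and> z0 < 1 \<and>
                  (\<forall>x v. (\<Sum>w\<in>UNIV - E. mpow (P x) n v w) \<le> z0)"
    and P_lip: "\<exists>K0>0. \<forall>x x' v. (\<Sum>w\<in>UNIV. \<bar>P x v w - P x' v w\<bar>) \<le> K0 * l1norm (x - x')"
  shows "\<exists>K>0. \<exists>c1>0. \<forall>x v lam t. lam > 0 \<longrightarrow> t > 0 \<longrightarrow>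
           tv_norm (\<lambda>w. mu_t a P lam x v t w - mu_infty P E x v w)
             \<le> K * exp (- c1 * t * lam) + K * t"
proof -
  obtain La where La: "\<And>x y v. dist (a x v) (a y v) \<le> La * dist x y" using a_lip by blast
  define L where "L = max La 1"
  have L_pos: "L > 0" unfolding L_def by simp
  have lipL: "norm (a x v - a y v) \<le> L * norm (x - y)" for x y v
  proof -
    have "dist (a x v) (a y v) \<le> La * dist x y" by (rule La)
    also have "\<dots> \<le> L * dist x y" unfolding L_def by (intro mult_right_mono) auto
    finally show ?thesis by (simp add: dist_norm)
  qed
  have "\<forall>v. \<exists>B. \<forall>x. norm (a x v) \<le> B" using a_bdd by (auto simp: bounded_iff)
  then obtain Bf where Bf: "\<And>v x. norm (a x v) \<le> Bf v" by metis
  define Ma where "Ma = (\<Sum>v\<in>UNIV. \<bar>Bf v\<bar>)"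
  have Ma: "norm (a x v) \<le> Ma" for x v
  proof -
    have "norm (a x v) \<le> \<bar>Bf v\<bar>" using Bf by (meson abs_ge_self order_trans)
    also have "\<dots> \<le> Ma" unfolding Ma_def by (rule member_le_sum) auto
    finally show ?thesis .
  qed
  obtain n0 z0 where n0: "n0 \<ge> 1" and z0: "z0 < 1" and rz: "\<And>x v. (\<Sum>w\<in>UNIV - E. mpow (P x) n0 v w) \<le> z0"
    using reach by blast
  obtain K0 where K0: "K0 > 0" and PL: "\<And>x x' v. (\<Sum>w\<in>UNIV. \<bar>P x v w - P x' v w\<bar>) \<le> K0 * l1norm (x - x')"
    using P_lip by blast
  interpret S: setting a P E Ma L K0
    by unfold_locales (use a_cont Ma lipL L_pos stoch absorbing K0 PL in auto)
  define z where "z = max z0 (1/2)"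
  have z: "0 < z" "z < 1" using z0 unfolding z_def by auto
  have Gz: "Gt (P x) E n0 s \<le> z" for x s
    using rz[of x s] unfolding Gt_def z_def by (meson max.cobounded1 order_trans)
  have lnz: "ln z < 0" using z by simp
  define \<rho> where "\<rho> = exp (ln z / n0)"
  have \<rho>: "0 < \<rho>" "\<rho> < 1" unfolding \<rho>_def using lnz n0 by (auto simp: divide_neg_pos)
  have GE: "Gt (P x) E k s \<le> (1/z) * exp (real k * ln z / n0)" for x k s
    by (rule Gt_exp[OF stoch(1)[of x] stoch(2)[of x] absorbing[of _ x] Gz[of x] z n0])
  have GE': "Gt (P x) E k s \<le> (1/z) * \<rho>^k" for x k s
  proof -
    have "exp (real k * ln z / n0) = \<rho>^k" unfolding \<rho>_def by (simp add: exp_of_nat_mult[symmetric] times_divide_eq_right)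
    then show ?thesis using GE[of x k s] by simp
  qed
  define Fb where "Fb = (1/z) * (1 / (1 - \<rho>))"
  have Fb: "S.Fk x K s \<le> Fb" for x K s
  proof -
    have "S.Fk x K s \<le> (\<Sum>k<K. (1/z) * \<rho>^k)" unfolding S.Fk_def by (intro sum_mono GE')
    also have "\<dots> = (1/z) * (\<Sum>k<K. \<rho>^k)" by (simp add: sum_distrib_left)
    also have "(\<Sum>k<K. \<rho>^k) = (1 - \<rho>^K) / (1 - \<rho>)" using \<rho> by (simp add: sum_gp_strict)
    also have "(1/z) * ((1 - \<rho>^K) / (1 - \<rho>)) \<le> (1/z) * (1 / (1 - \<rho>))"
      using \<rho> z by (intro mult_left_mono divide_right_mono) auto
    finally show ?thesis unfolding Fb_def .
  qed
  have Fb0: "Fb \<ge> 0" unfolding Fb_def using \<rho> z by simp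
  define cb where "cb = real CARD('v) * K0 * (real CARD('n) * Ma) * Fb"
  have cb0: "cb \<ge> 0" unfolding cb_def using K0 S.Ma_nonneg Fb0 by simp
  define c where "c = - ln z / (4 * n0)"
  have "0 < 4 * real n0" using n0 by simp
  then have "ln z / (4 * real n0) < 0" by (rule divide_neg_pos[OF lnz])
  then have c0: "c > 0" unfolding c_def by simp
  define c1 where "c1 = min (1/4) c"
  have c10: "c1 > 0" unfolding c1_def using c0 by simp
  define Kz where "Kz = (1/z) * exp (- ln z / n0)"
  have Kz0: "Kz > 0" unfolding Kz_def using z by simp
  define K where "K = 2 * cb + 2 + 4 * Kz"
  have K0': "K > 0" unfolding K_def using cb0 Kz0 by simp
  have main: "\<forall>x v lam t. lam > 0 \<longrightarrow> t > 0 \<longrightarrow>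
           tv_norm (\<lambda>w. mu_t a P lam x v t w - mu_infty P E x v w)
             \<le> K * exp (- c1 * t * lam) + K * t"
  proof (intro allI impI)
    fix x :: "real^'n" and v :: 'v and lam t :: real
    assume lam: "lam > 0" and t: "t > 0"
    define m where "m = nat \<lfloor>lam * t / 4\<rfloor>"
    have lt0: "lam * t > 0" using lam t by simp
    have m1: "real m \<le> lam * t / 4" unfolding m_def using lt0 by linarith
    have m2: "lam * t / 4 - 1 \<le> real m" unfolding m_def using lt0 by linarith
    define e where "e = exp (- c1 * t * lam)"
    have e0: "e > 0" unfolding e_def by simp
    interpret N: prob_space "noise_space lam" by (rule prob_noise[OF lam])
    have GB: "Gt (P x) E m v \<le> Kz * e"
    proof -
      have g1: "Gt (P x) E m v \<le> (1/z) * exp (real m * ln z / n0)" by (rule GE)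
      have "exp (real m * ln z / n0) \<le> exp ((lam * t / 4 - 1) * (ln z / n0))"
      proof -
        have "ln z / n0 < 0" using lnz n0 by (simp add: divide_neg_pos)
        then have "real m * (ln z / n0) \<le> (lam * t / 4 - 1) * (ln z / n0)"
          by (intro mult_right_mono_neg[OF m2]) simp
        then show ?thesis by simp
      qed
      also have "exp ((lam * t / 4 - 1) * (ln z / n0)) = exp (- ln z / n0) * exp (- c * t * lam)"
      proof -
        have "real n0 > 0" using n0 by simp
        then show ?thesis unfolding c_def by (simp add: exp_add[symmetric] field_simps)
      qed
      also have "\<dots> \<le> exp (- ln z / n0) * e"
      proof -
        have "c1 * (t * lam) \<le> c * (t * lam)" unfolding c1_def using lt0 by (intro mult_right_mono) (auto simp: mult.commute)
        then have "exp (- c * t * lam) \<le> e" unfolding e_def by simp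
        then show ?thesis by simp
      qed
      finally have g2: "exp (real m * ln z / n0) \<le> exp (- ln z / n0) * e" .
      have "(1/z) * exp (real m * ln z / n0) \<le> (1/z) * (exp (- ln z / n0) * e)"
        using g2 z by (intro mult_left_mono) auto
      then show ?thesis using g1 unfolding Kz_def by (simp add: mult.assoc)
    qed
    have TBd: "2^m * exp (- (lam * t / 2)) \<le> e"
    proof -
      have "(2::real) \<le> exp 1" using exp_ge_add_one_self[of 1] by simp
      then have "(2::real)^m \<le> exp 1 ^ m" by (intro power_mono) auto
      also have "\<dots> = exp (real m)" by (simp add: exp_of_nat_mult[symmetric])
      finally have "2^m * exp (- (lam * t / 2)) \<le> exp (real m) * exp (- (lam * t / 2))" by simp
      also have "\<dots> = exp (real m - lam * t / 2)" by (simp add: exp_add[symmetric])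
      also have "\<dots> \<le> exp (- (lam * t / 4))" using m1 by simp
      also have "\<dots> \<le> e"
      proof -
        have "c1 \<le> 1/4" unfolding c1_def by simp
        then have "c1 * (t * lam) \<le> 1/4 * (t * lam)" using lt0 by (intro mult_right_mono) (auto simp: mult.commute)
        then have "- (lam * t / 4) \<le> - c1 * t * lam" by (simp add: algebra_simps)
        then show ?thesis unfolding e_def by simp
      qed
      finally show ?thesis .
    qed
    define D where "D = {\<omega>\<in>space (noise_space lam). V_proc a P x v t \<omega> \<noteq> Wc (P x) v \<omega> m}"
    have mD: "measure (noise_space lam) D \<le> cb * t + 2^m * exp (- (lam * t / 2)) + Gt (P x) E m v"
    proof (rule measure_le_ennreal[OF N.prob_space_axioms])
      have "emeasure (noise_space lam) D
         \<le> ennreal (real CARD('v) * K0 * (real CARD('n) * Ma * t) * Fb) + ennreal (2^m * exp (- (lam * t / 2)))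
           + ennreal (Gt (P x) E m v)"
        using S.est[where m=m and x=x and v=v and Fb=Fb, OF lam t Fb] unfolding D_def by simp
      also have "\<dots> = ennreal (cb * t + 2^m * exp (- (lam * t / 2)) + Gt (P x) E m v)"
      proof -
        have a0: "0 \<le> cb * t" using cb0 t by simp
        have b0: "0 \<le> 2^m * exp (- (lam * t / 2))" by simp
        have g0: "0 \<le> Gt (P x) E m v" by (rule S.Gt_nn)
        have eq1: "real CARD('v) * K0 * (real CARD('n) * Ma * t) * Fb = cb * t" unfolding cb_def by (simp add: mult_ac)
        have "ennreal (cb * t) + ennreal (2^m * exp (- (lam * t / 2))) = ennreal (cb * t + 2^m * exp (- (lam * t / 2)))"
          by (rule ennreal_plus[OF a0 b0, symmetric])
        moreover have "ennreal (cb * t + 2^m * exp (- (lam * t / 2))) + ennreal (Gt (P x) E m v) = ennreal (cb * t + 2^m * exp (- (lam * t / 2)) + Gt (P x) E m v)"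
          by (rule ennreal_plus[symmetric]) (use a0 b0 g0 in auto)
        ultimately show ?thesis unfolding eq1 by simp
      qed
      finally show "emeasure (noise_space lam) D \<le> ennreal (cb * t + 2^m * exp (- (lam * t / 2)) + Gt (P x) E m v)" .
      show "0 \<le> cb * t + 2^m * exp (- (lam * t / 2)) + Gt (P x) E m v"
        using cb0 t S.Gt_nn[of x m v] by simp
    qed
    have Pw: "measure (noise_space lam) {\<omega>\<in>space (noise_space lam). Wc (P x) v \<omega> m = w} = mpow (P x) m v w" for w
    proof -
      have "emeasure (noise_space lam) {\<omega>. Wc (P x) v \<omega> m = w} = ennreal (mpow (P x) m v w)"
        by (rule W_law[OF lam]) (use stoch in auto)
      then show ?thesis using mpow_nonneg'[of "P x" m v w] stoch by (simp add: measure_def)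
    qed
    have T1: "(\<Sum>w\<in>UNIV. \<bar>mu_t a P lam x v t w - mpow (P x) m v w\<bar>) \<le> 2 * measure (noise_space lam) D"
      unfolding mu_t_def D_def Pw[symmetric]
      by (rule tv_pair[OF N.prob_space_axioms S.V_meas Wc_meas])
    have T2: "(\<Sum>w\<in>UNIV. \<bar>mpow (P x) m v w - mu_infty P E x v w\<bar>) = 2 * Gt (P x) E m v"
      unfolding mu_infty_def
      by (rule tv_matrix[OF stoch(1)[of x] stoch(2)[of x] absorbing[of _ x] Gz[of x] z n0])
    have "tv_norm (\<lambda>w. mu_t a P lam x v t w - mu_infty P E x v w)
        \<le> (\<Sum>w\<in>UNIV. \<bar>mu_t a P lam x v t w - mpow (P x) m v w\<bar> + \<bar>mpow (P x) m v w - mu_infty P E x v w\<bar>)"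
      unfolding tv_norm_def by (intro sum_mono) (rule abs_tri3)
    also have "\<dots> = (\<Sum>w\<in>UNIV. \<bar>mu_t a P lam x v t w - mpow (P x) m v w\<bar>) + (\<Sum>w\<in>UNIV. \<bar>mpow (P x) m v w - mu_infty P E x v w\<bar>)"
      by (rule sum.distrib)
    also have "\<dots> \<le> 2 * measure (noise_space lam) D + 2 * Gt (P x) E m v" using T1 T2 by simp
    also have "\<dots> \<le> 2 * (cb * t + 2^m * exp (- (lam * t / 2)) + Gt (P x) E m v) + 2 * Gt (P x) E m v"
      using mD by simp
    also have "\<dots> \<le> 2 * cb * t + 2 * e + 4 * (Kz * e)" using TBd GB by simp
    also have "\<dots> \<le> K * e + K * t"
    proof -
      have "2 * cb * t \<le> K * t" unfolding K_def using t Kz0 by (intro mult_right_mono) auto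
      moreover have "2 * e + 4 * (Kz * e) = (2 + 4 * Kz) * e" by (simp add: algebra_simps)
      moreover have "(2 + 4 * Kz) * e \<le> K * e" unfolding K_def using e0 cb0 by (intro mult_right_mono) auto
      ultimately show ?thesis by linarith
    qed
    finally show "tv_norm (\<lambda>w. mu_t a P lam x v t w - mu_infty P E x v w) \<le> K * exp (- c1 * t * lam) + K * t"
      unfolding e_def .
  qed
  show ?thesis using main K0' c10 by blast
qed


end
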